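(* Let $(M,\mathcal{T})$ be an edge-transitive closed pseudo 3-manifold and let $d=d_e$ be the common valence of its edges. (1) If $d\ne 6$, then there exists no zero-curvature generalized decorated metric on $(M,\mathcal T)$, and any solution $l(t)$ of the extended Ricci flow satisfies $|l(t_n)|\to\infty$ along some sequence $t_n\to\infty$. (2) If $d=6$, then there exists a zero-curvature decorated metric, and any solution $l(t)$ of the extended Ricci flow converges exponentially fast to a zero-curvature decorated metric.
   Context: Closed pseudo 3-manifold $(M,\mathcal T)$: quotient of a disjoint union $\mathscr T$ of finitely many tetrahedra by affine isomorphisms pairing faces, every 2-face being paired with another; $E$ is the set of edge classes. The valence $d_e$ of $e\in E$ is the number of edges of $\mathscr T$ in the class $e$. $(M,\mathcal T)$ is edge-transitive if for any $e,\hat e\in E$ there is an automorphism of $\mathcal T$ mapping $e$ to $\hat e$. For a tetrahedron $\sigma$ with vertices $v_1,\dots,v_4$ and $l\in\mathbb R^E$, $l_\sigma=(l_{ij})\in\mathbb R^6$ with $l_{ij}=l(\text{class of } v_iv_j)$. Extended dihedral angles: for $(x_1,x_2,x_3)\in\mathbb R^3_{>0}$, $a_i$ is the Euclidean angle opposite $x_i$ if strict triangle inequalities hold, and $a_i=\pi$, $a_j=a_k=0$ if $x_i\ge x_j+x_k$. For $l\in\mathbb R^6$, $\{i,j,k,h\}=\{1,2,3,4\}$, $\alpha_{ij}(l)$ is the generalized angle opposite the side $e^{(l_{ij}+l_{kh})/2}$ in the generalized triangle with sides $e^{(l_{ij}+l_{kh})/2},e^{(l_{ik}+l_{jh})/2},e^{(l_{ih}+l_{jk})/2}$.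 $\mathscr L\subset\mathbb R^6$ is where these satisfy strict triangle inequalities (decorated ideal hyperbolic tetrahedra). A generalized decorated metric is any $l\in\mathbb R^E$; a decorated metric is one with $l_\sigma\in\mathscr L$ for all $\sigma$. Generalized Ricci curvature: $\widetilde K_e(l)=2\pi-\sum\alpha_{ij}(l_\sigma)$ over pairs (tetrahedron $\sigma$, edge $v_iv_j$ of $\sigma$ in class $e$). Zero-curvature means $\widetilde K(l)=0$. Extended Ricci flow: $\frac{d}{dt}l(t)=\widetilde K(l(t))$, $t\ge 0$, $l(t)\in\mathbb R^E$. *)

theory Defs
  imports Complex_Main
begin

text \<open>Tetrahedra are indexed by elements of a finite set Tet; every tetrahedron has
vertices 0,1,2,3. A face of the disjoint union is a pair (sigma, i): the face of
sigma opposite to vertex i. The face pairing is given by glue (an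
involution without fixed points on faces) and the affine isomorphism of the face f
onto the face glue f is given by the vertex bijection gmap f.\<close>

definition V4 :: "nat set" where "V4 = {0..<4}"

definition tet_edges :: "nat set set" where
  "tet_edges = {A. A \<subseteq> V4 \<and> card A = 2}"

definition faces :: "'a set \<Rightarrow> ('a \<times> nat) set" where
  "faces Tet = Tet \<times> V4"

definition edges :: "'a set \<Rightarrow> ('a \<times> nat set) set" where
  "edges Tet = Tet \<times> tet_edges"

definition pseudo3 :: "'a set \<Rightarrow> ('a \<times> nat \<Rightarrow> 'a \<times> nat) \<Rightarrow> ('a \<times> nat \<Rightarrow> nat \<Rightarrow> nat) \<Rightarrow> bool" where
  "pseudo3 Tet glue gmap \<longleftrightarrow> finite Tet \<and> Tet \<noteq> {} \<and>
     (\<forall>f\<in>faces Tet. glue f \<in> faces Tet \<and> glue f \<noteq> f \<and> glue (glue f) = f \<and>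
        bij_betw (gmap f) (V4 - {snd f}) (V4 - {snd (glue f)}) \<and>
        (\<forall>v\<in>V4 - {snd f}. gmap (glue f) (gmap f v) = v))"

definition edge_step :: "'a set \<Rightarrow> ('a \<times> nat \<Rightarrow> 'a \<times> nat) \<Rightarrow> ('a \<times> nat \<Rightarrow> nat \<Rightarrow> nat)
    \<Rightarrow> (('a \<times> nat set) \<times> ('a \<times> nat set)) set" where
  "edge_step Tet glue gmap = {((\<sigma>, A), (\<tau>, B)). (\<sigma>, A) \<in> edges Tet \<and> (\<tau>, B) \<in> edges Tet \<and>
      (\<exists>i\<in>V4. i \<notin> A \<and> fst (glue (\<sigma>, i)) = \<tau> \<and> B = gmap (\<sigma>, i) ` A)}"

definition edge_rel :: "'a set \<Rightarrow> ('a \<times> nat \<Rightarrow> 'a \<times> nat) \<Rightarrow> ('a \<times> nat \<Rightarrow> nat \<Rightarrow> nat)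
    \<Rightarrow> (('a \<times> nat set) \<times> ('a \<times> nat set)) set" where
  "edge_rel Tet glue gmap = (edge_step Tet glue gmap \<union> (edge_step Tet glue gmap)\<inverse>)\<^sup>*"

definition edge_class :: "'a set \<Rightarrow> ('a \<times> nat \<Rightarrow> 'a \<times> nat) \<Rightarrow> ('a \<times> nat \<Rightarrow> nat \<Rightarrow> nat)
    \<Rightarrow> 'a \<times> nat set \<Rightarrow> ('a \<times> nat set) set" where
  "edge_class Tet glue gmap x = {y. (x, y) \<in> edge_rel Tet glue gmap}"

definition edge_classes :: "'a set \<Rightarrow> ('a \<times> nat \<Rightarrow> 'a \<times> nat) \<Rightarrow> ('a \<times> nat \<Rightarrow> nat \<Rightarrow> nat)
    \<Rightarrow> ('a \<times> nat set) set set" where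
  "edge_classes Tet glue gmap = edge_class Tet glue gmap ` edges Tet"

definition valence :: "('a \<times> nat set) set \<Rightarrow> nat" where
  "valence e = card e"

definition automorphism :: "'a set \<Rightarrow> ('a \<times> nat \<Rightarrow> 'a \<times> nat) \<Rightarrow> ('a \<times> nat \<Rightarrow> nat \<Rightarrow> nat)
    \<Rightarrow> ('a \<Rightarrow> 'a) \<Rightarrow> ('a \<Rightarrow> nat \<Rightarrow> nat) \<Rightarrow> bool" where
  "automorphism Tet glue gmap \<pi> \<rho> \<longleftrightarrow> bij_betw \<pi> Tet Tet \<and>
     (\<forall>\<sigma>\<in>Tet. bij_betw (\<rho> \<sigma>) V4 V4) \<and>
     (\<forall>\<sigma>\<in>Tet. \<forall>i\<in>V4.
        glue (\<pi> \<sigma>, \<rho> \<sigma> i) = (\<pi> (fst (glue (\<sigma>, i))), \<rho> (fst (glue (\<sigma>, i))) (snd (glue (\<sigma>, i)))) \<and>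
        (\<forall>v\<in>V4 - {i}. gmap (\<pi> \<sigma>, \<rho> \<sigma> i) (\<rho> \<sigma> v) = \<rho> (fst (glue (\<sigma>, i))) (gmap (\<sigma>, i) v)))"

definition edge_map :: "('a \<Rightarrow> 'a) \<Rightarrow> ('a \<Rightarrow> nat \<Rightarrow> nat) \<Rightarrow> 'a \<times> nat set \<Rightarrow> 'a \<times> nat set" where
  "edge_map \<pi> \<rho> x = (\<pi> (fst x), \<rho> (fst x) ` snd x)"

definition edge_transitive :: "'a set \<Rightarrow> ('a \<times> nat \<Rightarrow> 'a \<times> nat) \<Rightarrow> ('a \<times> nat \<Rightarrow> nat \<Rightarrow> nat) \<Rightarrow> bool" where
  "edge_transitive Tet glue gmap \<longleftrightarrow>
     (\<forall>e\<in>edge_classes Tet glue gmap. \<forall>e'\<in>edge_classes Tet glue gmap.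
        \<exists>\<pi> \<rho>. automorphism Tet glue gmap \<pi> \<rho> \<and> edge_map \<pi> \<rho> ` e = e')"

definition tri_strict :: "real \<Rightarrow> real \<Rightarrow> real \<Rightarrow> bool" where
  "tri_strict x y z \<longleftrightarrow> x < y + z \<and> y < x + z \<and> z < x + y"

definition gen_angle :: "real \<Rightarrow> real \<Rightarrow> real \<Rightarrow> real" where
  "gen_angle x y z =
     (if tri_strict x y z then arccos ((y\<^sup>2 + z\<^sup>2 - x\<^sup>2) / (2 * y * z))
      else if x \<ge> y + z then pi else 0)"

definition mval :: "(nat set \<Rightarrow> real) \<Rightarrow> nat set \<Rightarrow> real" where
  "mval l A = exp ((l A + l (V4 - A)) / 2)"

text \<open>alpha_ij(l): the generalized angle opposite e^((l_ij+l_kh)/2) in the generalized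
triangle with sides e^((l_ij+l_kh)/2), e^((l_ik+l_jh)/2), e^((l_ih+l_jk)/2).\<close>
definition alpha_t :: "(nat set \<Rightarrow> real) \<Rightarrow> nat set \<Rightarrow> real" where
  "alpha_t l A =
     (let i = Min A; k = Min (V4 - A); h = Max (V4 - A)
      in gen_angle (mval l A) (mval l {i, k}) (mval l {i, h}))"

definition in_L :: "(nat set \<Rightarrow> real) \<Rightarrow> bool" where
  "in_L l \<longleftrightarrow> tri_strict (mval l {0, 1}) (mval l {0, 2}) (mval l {0, 3})"

text \<open>A generalized decorated metric is a function l on edge classes (only its values on E
matter). l_sigma assigns to the edge A of sigma the value of l on the class of (sigma, A).\<close>
definition lsig :: "'a set \<Rightarrow> ('a \<times> nat \<Rightarrow> 'a \<times> nat) \<Rightarrow> ('a \<times> nat \<Rightarrow> nat \<Rightarrow> nat)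
    \<Rightarrow> (('a \<times> nat set) set \<Rightarrow> real) \<Rightarrow> 'a \<Rightarrow> nat set \<Rightarrow> real" where
  "lsig Tet glue gmap l \<sigma> A = l (edge_class Tet glue gmap (\<sigma>, A))"

definition decorated :: "'a set \<Rightarrow> ('a \<times> nat \<Rightarrow> 'a \<times> nat) \<Rightarrow> ('a \<times> nat \<Rightarrow> nat \<Rightarrow> nat)
    \<Rightarrow> (('a \<times> nat set) set \<Rightarrow> real) \<Rightarrow> bool" where
  "decorated Tet glue gmap l \<longleftrightarrow> (\<forall>\<sigma>\<in>Tet. in_L (lsig Tet glue gmap l \<sigma>))"

definition curv :: "'a set \<Rightarrow> ('a \<times> nat \<Rightarrow> 'a \<times> nat) \<Rightarrow> ('a \<times> nat \<Rightarrow> nat \<Rightarrow> nat)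
    \<Rightarrow> (('a \<times> nat set) set \<Rightarrow> real) \<Rightarrow> ('a \<times> nat set) set \<Rightarrow> real" where
  "curv Tet glue gmap l e =
     2 * pi - (\<Sum>x\<in>e. alpha_t (lsig Tet glue gmap l (fst x)) (snd x))"

definition zero_curv :: "'a set \<Rightarrow> ('a \<times> nat \<Rightarrow> 'a \<times> nat) \<Rightarrow> ('a \<times> nat \<Rightarrow> nat \<Rightarrow> nat)
    \<Rightarrow> (('a \<times> nat set) set \<Rightarrow> real) \<Rightarrow> bool" where
  "zero_curv Tet glue gmap l \<longleftrightarrow> (\<forall>e\<in>edge_classes Tet glue gmap. curv Tet glue gmap l e = 0)"

definition enorm :: "('a \<times> nat set) set set \<Rightarrow> (('a \<times> nat set) set \<Rightarrow> real) \<Rightarrow> real" where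
  "enorm E l = sqrt (\<Sum>e\<in>E. (l e)\<^sup>2)"

definition ricci_flow_sol :: "'a set \<Rightarrow> ('a \<times> nat \<Rightarrow> 'a \<times> nat) \<Rightarrow> ('a \<times> nat \<Rightarrow> nat \<Rightarrow> nat)
    \<Rightarrow> (real \<Rightarrow> ('a \<times> nat set) set \<Rightarrow> real) \<Rightarrow> bool" where
  "ricci_flow_sol Tet glue gmap l \<longleftrightarrow>
     (\<forall>e\<in>edge_classes Tet glue gmap. \<forall>t\<ge>0.
        ((\<lambda>s. l s e) has_real_derivative curv Tet glue gmap (l t) e) (at t within {0..}))"

end

theory Submission
  imports Defs
begin


lemma ga_sym: "gen_angle x y z = gen_angle x z y"
  unfolding gen_angle_def tri_strict_def by (simp add: add.commute mult.commute mult.left_commute)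

lemma cos_bounds:
  fixes x y z :: real
  assumes "0<x" "0<y" "0<z" "tri_strict x y z"
  shows "-1 < (y\<^sup>2+z\<^sup>2-x\<^sup>2)/(2*y*z) \<and> (y\<^sup>2+z\<^sup>2-x\<^sup>2)/(2*y*z) < 1"
proof -
  have h1: "0 < (x - y + z) * (x + y - z)" using assms unfolding tri_strict_def by (intro mult_pos_pos) auto
  have h2: "0 < (y + z - x) * (y + z + x)" using assms unfolding tri_strict_def by (intro mult_pos_pos) auto
  have d: "0 < 2*y*z" using assms by simp
  have "y\<^sup>2+z\<^sup>2-x\<^sup>2 < 2*y*z" using h1 by (simp add: algebra_simps power2_eq_square)
  moreover have "-(2*y*z) < y\<^sup>2+z\<^sup>2-x\<^sup>2" using h2 by (simp add: algebra_simps power2_eq_square)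
  ultimately show ?thesis using d by (simp add: divide_less_eq less_divide_eq)
qed

lemma tri_perm:
  "tri_strict x y z \<Longrightarrow> tri_strict y x z" "tri_strict x y z \<Longrightarrow> tri_strict z x y"
  "tri_strict x y z \<Longrightarrow> tri_strict x z y"
  unfolding tri_strict_def by auto

lemma arccos_sum3:
  fixes x y z :: real
  assumes "0<x" "0<y" "0<z" "tri_strict x y z"
  shows "arccos ((y\<^sup>2+z\<^sup>2-x\<^sup>2)/(2*y*z)) + arccos ((x\<^sup>2+z\<^sup>2-y\<^sup>2)/(2*x*z))
         + arccos ((x\<^sup>2+y\<^sup>2-z\<^sup>2)/(2*x*y)) = pi"
proof -
  define u where "u = (y\<^sup>2+z\<^sup>2-x\<^sup>2)/(2*y*z)"
  define v where "v = (x\<^sup>2+z\<^sup>2-y\<^sup>2)/(2*x*z)"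
  define w where "w = (x\<^sup>2+y\<^sup>2-z\<^sup>2)/(2*x*y)"
  define H where "H = (x+y+z)*(-x+y+z)*(x-y+z)*(x+y-z)"
  have Hpos: "0 < H" using assms unfolding H_def tri_strict_def
    by (intro mult_pos_pos) auto
  have ub: "-1 < u" "u < 1" using cos_bounds[OF assms] u_def by auto
  have vb: "-1 < v" "v < 1" using cos_bounds[OF assms(2,1,3) tri_perm(1)[OF assms(4)]] v_def by auto
  have wb: "-1 < w" "w < 1" using cos_bounds[OF assms(3,1,2) tri_perm(2)[OF assms(4)]] w_def by auto
  have e1: "(1 - u\<^sup>2) * (1 - v\<^sup>2) = (H / (4*x*y*z\<^sup>2))\<^sup>2"
    unfolding u_def v_def H_def using assms by (simp add: field_simps power2_eq_square; simp add: algebra_simps)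
  have e2: "u * v + w = H / (4*x*y*z\<^sup>2)"
    unfolding u_def v_def w_def H_def using assms by (simp add: field_simps power2_eq_square; simp add: algebra_simps)
  have "sin (arccos u) * sin (arccos v) = sqrt ((1 - u\<^sup>2) * (1 - v\<^sup>2))"
    using ub vb by (simp add: sin_arccos real_sqrt_mult)
  also have "\<dots> = H / (4*x*y*z\<^sup>2)" unfolding e1 using Hpos assms by simp
  finally have ss: "sin (arccos u) * sin (arccos v) = H / (4*x*y*z\<^sup>2)" .
  have c: "cos (arccos u + arccos v) = - w"
    unfolding cos_add using ub vb ss e2 by simp
  have uv: "-v \<le> u"
  proof -
    have "u + v = (x+y)*(z\<^sup>2 - (x-y)\<^sup>2)/(2*x*y*z)"
      unfolding u_def v_def using assms by (simp add: field_simps power2_eq_square; simp add: algebra_simps)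
    moreover have "0 < z\<^sup>2 - (x-y)\<^sup>2"
    proof -
      have "0 < (z - (x-y)) * (z + (x-y))" using assms unfolding tri_strict_def by (intro mult_pos_pos) auto
      thus ?thesis by (simp add: algebra_simps power2_eq_square)
    qed
    ultimately have "0 < u + v" using assms by simp
    thus ?thesis by simp
  qed
  have "arccos u \<le> arccos (-v)" using uv ub vb by (intro arccos_le_arccos) auto
  hence le: "arccos u + arccos v \<le> pi" using vb by (simp add: arccos_minus)
  have "arccos u + arccos v = arccos (cos (arccos u + arccos v))"
    using le ub vb by (simp add: arccos_cos arccos_lbound)
  also have "\<dots> = pi - arccos w" using c wb by (simp add: arccos_minus)
  finally show ?thesis unfolding u_def v_def w_def by simp
qed


lemma cos_lip: fixes a b :: real shows "cos b - cos a \<le> \<bar>a - b\<bar>"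
proof -
  have "cos b - cos a = 2 * sin ((b + a) / 2) * sin ((a - b) / 2)" by (rule cos_diff_cos)
  also have "\<dots> \<le> \<bar>2 * sin ((b + a) / 2) * sin ((a - b) / 2)\<bar>" by simp
  also have "\<dots> = 2 * \<bar>sin ((b + a) / 2)\<bar> * \<bar>sin ((a - b) / 2)\<bar>" by (simp add: abs_mult)
  also have "\<dots> \<le> 2 * 1 * \<bar>(a - b) / 2\<bar>"
    by (intro mult_mono abs_sin_x_le_abs_x) auto
  finally show ?thesis by simp
qed

lemma ga_strict: "tri_strict x y z \<Longrightarrow> gen_angle x y z = arccos ((y\<^sup>2 + z\<^sup>2 - x\<^sup>2) / (2 * y * z))"
  unfolding gen_angle_def by simp

lemma ga_pi: "\<not> tri_strict x y z \<Longrightarrow> x \<ge> y + z \<Longrightarrow> gen_angle x y z = pi"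
  unfolding gen_angle_def by simp

lemma ga_zero: "\<not> tri_strict x y z \<Longrightarrow> \<not> x \<ge> y + z \<Longrightarrow> gen_angle x y z = 0"
  unfolding gen_angle_def by simp

lemma ga_range:
  fixes x y z :: real
  assumes "0<x" "0<y" "0<z"
  shows "0 \<le> gen_angle x y z \<and> gen_angle x y z \<le> pi"
proof (cases "tri_strict x y z")
  case True
  then show ?thesis using cos_bounds[OF assms True] by (simp add: ga_strict arccos_lbound arccos_ubound)
next
  case False
  then show ?thesis using ga_pi ga_zero pi_gt_zero by (cases "x \<ge> y + z") auto
qed

lemma ga_sum:
  fixes x y z :: real
  assumes "0<x" "0<y" "0<z"
  shows "gen_angle x y z + gen_angle y x z + gen_angle z x y = pi"
proof (cases "tri_strict x y z")
  case True
  have "tri_strict y x z" "tri_strict z x y" using tri_perm(1,2)[OF True] by auto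
  then show ?thesis using arccos_sum3[OF assms True] ga_strict[OF True] ga_strict[of y x z] ga_strict[of z x y]
    by linarith
next
  case False
  then have F: "\<not> tri_strict y x z" "\<not> tri_strict z x y" unfolding tri_strict_def by auto
  from False have "x \<ge> y + z \<or> y \<ge> x + z \<or> z \<ge> x + y" unfolding tri_strict_def by auto
  moreover
  { assume h: "x \<ge> y + z"
    have "gen_angle x y z = pi" by (rule ga_pi[OF False h])
    moreover have "gen_angle y x z = 0" using h assms by (intro ga_zero[OF F(1)]) linarith
    moreover have "gen_angle z x y = 0" using h assms by (intro ga_zero[OF F(2)]) linarith
    ultimately have ?thesis by simp }
  moreover
  { assume h: "y \<ge> x + z"
    have "gen_angle x y z = 0" using h assms by (intro ga_zero[OF False]) linarith
    moreover have "gen_angle y x z = pi" by (rule ga_pi[OF F(1) h])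
    moreover have "gen_angle z x y = 0" using h assms by (intro ga_zero[OF F(2)]) linarith
    ultimately have ?thesis by simp }
  moreover
  { assume h: "z \<ge> x + y"
    have "gen_angle x y z = 0" using h assms by (intro ga_zero[OF False]) linarith
    moreover have "gen_angle y x z = 0" using h assms by (intro ga_zero[OF F(1)]) linarith
    moreover have "gen_angle z x y = pi" by (rule ga_pi[OF F(2) h])
    ultimately have ?thesis by simp }
  ultimately show ?thesis by blast
qed

lemma ga_equi: "0 < x \<Longrightarrow> gen_angle x x x = pi / 3"
proof -
  assume x: "0 < x"
  have t: "tri_strict x x x" using x unfolding tri_strict_def by simp
  have e: "(x\<^sup>2 + x\<^sup>2 - x\<^sup>2) / (2 * x * x) = 1/2" using x by (simp add: power2_eq_square)
  have "gen_angle x x x = arccos ((x\<^sup>2 + x\<^sup>2 - x\<^sup>2) / (2 * x * x))" by (rule ga_strict[OF t])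
  also have "\<dots> = arccos (1/2)" by (simp only: e)
  finally show ?thesis by simp
qed


lemma pair_sign:
  fixes x y z :: real
  assumes "0<x" "0<y" "0<z" "y \<le> z"
  shows "gen_angle y x z \<le> gen_angle z x y"
proof (cases "tri_strict x y z")
  case True
  have T2: "tri_strict y x z" "tri_strict z x y" using tri_perm(1,2)[OF True] by auto
  have cb1: "-1 < (x\<^sup>2+z\<^sup>2-y\<^sup>2)/(2*x*z)" "(x\<^sup>2+z\<^sup>2-y\<^sup>2)/(2*x*z) < 1"
    using cos_bounds[OF assms(2,1,3) T2(1)] by auto
  have cb2: "-1 < (x\<^sup>2+y\<^sup>2-z\<^sup>2)/(2*x*y)" "(x\<^sup>2+y\<^sup>2-z\<^sup>2)/(2*x*y) < 1"
    using cos_bounds[OF assms(3,1,2) T2(2)] by auto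
  have id: "(x\<^sup>2+z\<^sup>2-y\<^sup>2)/(2*x*z) - (x\<^sup>2+y\<^sup>2-z\<^sup>2)/(2*x*y) = (z - y) * ((z+y)\<^sup>2 - x\<^sup>2) / (2*x*y*z)"
    using assms by (simp add: field_simps power2_eq_square; simp add: algebra_simps)
  have "0 < (z + y - x) * (z + y + x)" using True assms unfolding tri_strict_def by (intro mult_pos_pos) auto
  hence "0 < (z+y)\<^sup>2 - x\<^sup>2" by (simp add: algebra_simps power2_eq_square)
  hence "0 \<le> (z - y) * ((z+y)\<^sup>2 - x\<^sup>2)" using assms by (intro mult_nonneg_nonneg) linarith+
  hence "0 \<le> (z - y) * ((z+y)\<^sup>2 - x\<^sup>2) / (2*x*y*z)" using assms by (intro divide_nonneg_pos) auto
  hence "(x\<^sup>2+y\<^sup>2-z\<^sup>2)/(2*x*y) \<le> (x\<^sup>2+z\<^sup>2-y\<^sup>2)/(2*x*z)" using id by simp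
  hence "arccos ((x\<^sup>2+z\<^sup>2-y\<^sup>2)/(2*x*z)) \<le> arccos ((x\<^sup>2+y\<^sup>2-z\<^sup>2)/(2*x*y))"
    using cb1 cb2 by (intro arccos_le_arccos) auto
  then show ?thesis using T2 by (simp add: ga_strict)
next
  case False
  then have F: "\<not> tri_strict y x z" "\<not> tri_strict z x y" unfolding tri_strict_def by auto
  from False have "x \<ge> y + z \<or> y \<ge> x + z \<or> z \<ge> x + y" unfolding tri_strict_def by auto
  then show ?thesis using False F assms unfolding gen_angle_def by auto
qed

lemma pair_bound:
  fixes sx sy sz M :: real
  assumes "sy \<le> sx" "sz \<le> sx" "sx - sy \<le> M"
  defines "x \<equiv> exp (sx/2)" and "y \<equiv> exp (sy/2)" and "z \<equiv> exp (sz/2)"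
  shows "exp (-M/2) / 2 * (sx - sy)\<^sup>2 \<le> (gen_angle x y z - gen_angle y x z) * (sx - sy)"
proof -
  have pos: "0<x" "0<y" "0<z" unfolding x_def y_def z_def by auto
  have xy: "y \<le> x" "z \<le> x" using assms unfolding x_def y_def z_def by auto
  define k where "k = exp (-M/2) / 2"
  have kpos: "0 < k" unfolding k_def by simp
  have D: "0 \<le> sx - sy" using assms by simp
  have key: "k * (sx - sy) \<le> gen_angle x y z - gen_angle y x z"
  proof (cases "tri_strict x y z")
    case True
    have T2: "tri_strict y x z" using tri_perm(1)[OF True] by auto
    have cb1: "-1 < (x\<^sup>2+z\<^sup>2-y\<^sup>2)/(2*x*z)" "(x\<^sup>2+z\<^sup>2-y\<^sup>2)/(2*x*z) < 1"
      using cos_bounds[OF pos(2,1,3) T2] by auto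
    have cb2: "-1 < (y\<^sup>2+z\<^sup>2-x\<^sup>2)/(2*y*z)" "(y\<^sup>2+z\<^sup>2-x\<^sup>2)/(2*y*z) < 1"
      using cos_bounds[OF pos True] by auto
    have id: "(x\<^sup>2+z\<^sup>2-y\<^sup>2)/(2*x*z) - (y\<^sup>2+z\<^sup>2-x\<^sup>2)/(2*y*z) = (x - y) * ((x+y)\<^sup>2 - z\<^sup>2) / (2*x*y*z)"
      using pos by (simp add: field_simps power2_eq_square; simp add: algebra_simps)
    have "2*x*y \<le> (x+y)\<^sup>2 - z\<^sup>2"
    proof -
      have "z\<^sup>2 \<le> x\<^sup>2" using xy pos by (simp add: power_mono)
      moreover have "0 \<le> y\<^sup>2" by simp
      ultimately show ?thesis unfolding power2_sum by linarith
    qed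
    hence "(x - y) * (2*x*y) / (2*x*y*z) \<le> (x - y) * ((x+y)\<^sup>2 - z\<^sup>2) / (2*x*y*z)"
      using pos xy by (intro divide_right_mono mult_left_mono) auto
    moreover have "(x - y) * (2*x*y) / (2*x*y*z) = (x - y) / z" using pos by simp
    moreover have "(x - y) / x \<le> (x - y) / z" using pos xy by (intro divide_left_mono) auto
    moreover have "k * (sx - sy) \<le> (x - y) / x"
    proof -
      have "exp (sx/2) = exp (sy/2) * exp ((sx - sy)/2)" by (simp add: exp_add[symmetric] field_simps)
      hence "x - y = y * (exp ((sx - sy)/2) - 1)" unfolding x_def y_def by (simp add: algebra_simps)
      moreover have "(sx - sy)/2 \<le> exp ((sx - sy)/2) - 1" using exp_ge_add_one_self[of "(sx-sy)/2"] by linarith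
      ultimately have "y * ((sx - sy)/2) \<le> x - y" using pos by simp
      hence e0: "y * ((sx - sy)/2) / x \<le> (x - y) / x" using pos by (intro divide_right_mono) auto
      have e1: "y * ((sx - sy)/2) / x = (y / x) * ((sx - sy)/2)" by simp
      have "y / x = exp (sy/2 - sx/2)" unfolding x_def y_def by (simp add: exp_diff)
      moreover have "exp (-M/2) \<le> exp (sy/2 - sx/2)" using assms by simp
      ultimately have "exp (-M/2) \<le> y / x" by simp
      hence e2: "exp (-M/2) * ((sx - sy)/2) \<le> (y / x) * ((sx - sy)/2)" using D by (intro mult_right_mono) auto
      have "exp (-M/2) * ((sx - sy)/2) \<le> (x - y) / x" using e0 e1 e2 by linarith
      thus ?thesis unfolding k_def by simp
    qed
    ultimately have "k * (sx - sy) \<le> (x\<^sup>2+z\<^sup>2-y\<^sup>2)/(2*x*z) - (y\<^sup>2+z\<^sup>2-x\<^sup>2)/(2*y*z)"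
      using id by linarith
    also have "\<dots> \<le> \<bar>arccos ((y\<^sup>2+z\<^sup>2-x\<^sup>2)/(2*y*z)) - arccos ((x\<^sup>2+z\<^sup>2-y\<^sup>2)/(2*x*z))\<bar>"
      using cos_lip[of "arccos ((x\<^sup>2+z\<^sup>2-y\<^sup>2)/(2*x*z))" "arccos ((y\<^sup>2+z\<^sup>2-x\<^sup>2)/(2*y*z))"] cb1 cb2
      by simp
    finally have A: "k * (sx - sy) \<le> \<bar>gen_angle x y z - gen_angle y x z\<bar>"
      using True T2 by (simp add: ga_strict)
    have "gen_angle y x z \<le> gen_angle x y z"
      using pair_sign[OF pos(3) pos(2) pos(1) xy(1)] ga_sym by metis
    then show ?thesis using A by simp
  next
    case False
    have "x \<ge> y + z" using False xy pos unfolding tri_strict_def by auto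
    hence "gen_angle x y z = pi" "gen_angle y x z = 0" using False pos unfolding gen_angle_def tri_strict_def
      by auto
    moreover have "k * (sx - sy) \<le> 1"
    proof -
      have "M/2 \<le> exp (M/2)" using exp_ge_add_one_self[of "M/2"] by linarith
      hence "exp (-M/2) * (M/2) \<le> exp (-M/2) * exp (M/2)" by (intro mult_left_mono) auto
      also have "\<dots> = 1" by (simp add: exp_add[symmetric])
      finally have m1: "M * exp (-M/2) / 2 \<le> 1" by (simp add: mult.commute)
      have m2: "k * (sx - sy) \<le> k * M" using kpos assms by (intro mult_left_mono) auto
      have m3: "k * M = M * exp (-M/2) / 2" unfolding k_def by simp
      show ?thesis using m1 m2 m3 by linarith
    qed
    ultimately show ?thesis using pi_ge_two by linarith
  qed
  have "k * (sx - sy) * (sx - sy) \<le> (gen_angle x y z - gen_angle y x z) * (sx - sy)"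
    using key D by (rule mult_right_mono)
  thus ?thesis unfolding k_def by (simp add: power2_eq_square)
qed


lemma sq_tri: fixes a b :: real shows "(a - b)\<^sup>2 \<le> 2 * (a\<^sup>2 + b\<^sup>2)"
proof -
  have "0 \<le> (a + b)\<^sup>2" by simp
  thus ?thesis by (simp add: power2_eq_square algebra_simps)
qed

lemma tri_core:
  fixes s1 s2 s3 M :: real
  assumes "s2 \<le> s1" "s3 \<le> s1" "s1 - s2 \<le> M" "s1 - s3 \<le> M"
  defines "L1 \<equiv> exp (s1/2)" and "L2 \<equiv> exp (s2/2)" and "L3 \<equiv> exp (s3/2)"
  shows "exp (-M/2) / 6 * ((s1-s2)\<^sup>2 + (s1-s3)\<^sup>2 + (s2-s3)\<^sup>2) \<le>
    (gen_angle L1 L2 L3 - gen_angle L2 L1 L3) * (s1 - s2) + (gen_angle L1 L2 L3 - gen_angle L3 L1 L2) * (s1 - s3)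
    + (gen_angle L2 L1 L3 - gen_angle L3 L1 L2) * (s2 - s3)"
proof -
  define k where "k = exp (-M/2)"
  have kpos: "0 < k" unfolding k_def by simp
  have P12: "k / 2 * (s1 - s2)\<^sup>2 \<le> (gen_angle L1 L2 L3 - gen_angle L2 L1 L3) * (s1 - s2)"
    using pair_bound[of s2 s1 s3 M] assms unfolding k_def L1_def L2_def L3_def by simp
  have P13: "k / 2 * (s1 - s3)\<^sup>2 \<le> (gen_angle L1 L2 L3 - gen_angle L3 L1 L2) * (s1 - s3)"
    using pair_bound[of s3 s1 s2 M] assms ga_sym[of L1 L3 L2] unfolding k_def L1_def L2_def L3_def by simp
  have pos: "0 < L1" "0 < L2" "0 < L3" unfolding L1_def L2_def L3_def by auto
  have P23: "0 \<le> (gen_angle L2 L1 L3 - gen_angle L3 L1 L2) * (s2 - s3)"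
  proof (cases "s2 \<le> s3")
    case True
    hence "L2 \<le> L3" unfolding L2_def L3_def by simp
    hence "gen_angle L2 L1 L3 \<le> gen_angle L3 L1 L2" using pair_sign pos by blast
    thus ?thesis using True by (intro mult_nonpos_nonpos) auto
  next
    case False
    hence "L3 \<le> L2" unfolding L2_def L3_def by simp
    hence "gen_angle L3 L1 L2 \<le> gen_angle L2 L1 L3" using pair_sign pos by blast
    thus ?thesis using False by (intro mult_nonneg_nonneg) auto
  qed
  have sq: "(s2 - s3)\<^sup>2 \<le> 2 * ((s1 - s3)\<^sup>2 + (s1 - s2)\<^sup>2)"
    using sq_tri[of "s1 - s3" "s1 - s2"] by simp
  have "k / 6 * ((s1-s2)\<^sup>2 + (s1-s3)\<^sup>2 + (s2-s3)\<^sup>2) \<le> k / 6 * (3 * ((s1-s2)\<^sup>2 + (s1-s3)\<^sup>2))"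
    using sq kpos by (intro mult_left_mono) auto
  also have "\<dots> = k / 2 * (s1 - s2)\<^sup>2 + k / 2 * (s1 - s3)\<^sup>2" by (simp add: algebra_simps)
  finally show ?thesis using P12 P13 P23 unfolding k_def by linarith
qed

lemma tri_gen:
  fixes s1 s2 s3 M :: real
  assumes "\<bar>s1 - s2\<bar> \<le> M" "\<bar>s1 - s3\<bar> \<le> M" "\<bar>s2 - s3\<bar> \<le> M"
  defines "L1 \<equiv> exp (s1/2)" and "L2 \<equiv> exp (s2/2)" and "L3 \<equiv> exp (s3/2)"
  shows "exp (-M/2) / 6 * ((s1-s2)\<^sup>2 + (s1-s3)\<^sup>2 + (s2-s3)\<^sup>2) \<le>
    (gen_angle L1 L2 L3 - gen_angle L2 L1 L3) * (s1 - s2) + (gen_angle L1 L2 L3 - gen_angle L3 L1 L2) * (s1 - s3)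
    + (gen_angle L2 L1 L3 - gen_angle L3 L1 L2) * (s2 - s3)"
proof -
  consider "s2 \<le> s1 \<and> s3 \<le> s1" | "s1 \<le> s2 \<and> s3 \<le> s2" | "s1 \<le> s3 \<and> s2 \<le> s3" by linarith
  then show ?thesis
  proof cases
    case 1
    then show ?thesis using tri_core[of s2 s1 s3 M] assms unfolding L1_def L2_def L3_def by auto
  next
    case 2
    have "exp (-M/2) / 6 * ((s2-s1)\<^sup>2 + (s2-s3)\<^sup>2 + (s1-s3)\<^sup>2) \<le>
      (gen_angle L2 L1 L3 - gen_angle L1 L2 L3) * (s2 - s1) + (gen_angle L2 L1 L3 - gen_angle L3 L2 L1) * (s2 - s3)
      + (gen_angle L1 L2 L3 - gen_angle L3 L2 L1) * (s1 - s3)"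
      using tri_core[of s1 s2 s3 M] 2 assms unfolding L1_def L2_def L3_def by auto
    moreover have "gen_angle L3 L2 L1 = gen_angle L3 L1 L2" by (rule ga_sym)
    ultimately show ?thesis by (simp add: power2_commute algebra_simps)
  next
    case 3
    have "exp (-M/2) / 6 * ((s3-s1)\<^sup>2 + (s3-s2)\<^sup>2 + (s1-s2)\<^sup>2) \<le>
      (gen_angle L3 L1 L2 - gen_angle L1 L3 L2) * (s3 - s1) + (gen_angle L3 L1 L2 - gen_angle L2 L3 L1) * (s3 - s2)
      + (gen_angle L1 L3 L2 - gen_angle L2 L3 L1) * (s1 - s2)"
      using tri_core[of s1 s3 s2 M] 3 assms unfolding L1_def L2_def L3_def by auto
    moreover have "gen_angle L1 L3 L2 = gen_angle L1 L2 L3" by (rule ga_sym)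
    moreover have "gen_angle L2 L3 L1 = gen_angle L2 L1 L3" by (rule ga_sym)
    ultimately show ?thesis by (simp add: power2_commute algebra_simps)
  qed
qed


declare One_nat_def [simp del]


lemma V4_diffs:
  "V4 - {0,1} = {2,3}" "V4 - {2,3} = {0,1}" "V4 - {0,2} = {1,3}" "V4 - {1,3} = {0,2}"
  "V4 - {0,3} = {1,2}" "V4 - {1,2} = {0,3}"
  by (auto simp: V4_def)

lemma tet_edges_eq: "tet_edges = {{0,1},{0,2},{0,3},{1,2},{1,3},{2,3}}"
proof
  show "tet_edges \<subseteq> {{0,1},{0,2},{0,3},{1,2},{1,3},{2,3}}"
  proof
    fix A assume "A \<in> tet_edges"
    then have A: "A \<subseteq> {0..<4}" "card A = 2" unfolding tet_edges_def V4_def by auto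
    then obtain a b where ab: "A = {a,b}" "a \<noteq> b" by (auto simp: card_2_iff)
    then have "a < 4" "b < 4" using A by auto
    then have "a = 0 \<or> a = 1 \<or> a = 2 \<or> a = 3" "b = 0 \<or> b = 1 \<or> b = 2 \<or> b = 3" by auto
    then show "A \<in> {{0,1},{0,2},{0,3},{1,2},{1,3},{2,3}}" using ab
      by (auto simp: doubleton_eq_iff)
  qed
next
  show "{{0,1},{0,2},{0,3},{1,2},{1,3},{2,3}} \<subseteq> tet_edges"
    unfolding tet_edges_def V4_def by auto
qed

lemma mval_pairs:
  "mval L {2,3} = mval L {0,1}" "mval L {1,3} = mval L {0,2}" "mval L {1,2} = mval L {0,3}"
  unfolding mval_def by (simp_all add: V4_diffs add.commute)

lemma mval_eq: "mval L {0,1} = exp ((L {0,1} + L {2,3})/2)" "mval L {0,2} = exp ((L {0,2} + L {1,3})/2)"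
  "mval L {0,3} = exp ((L {0,3} + L {1,2})/2)"
  unfolding mval_def by (simp_all add: V4_diffs)

lemma alpha_vals:
  fixes L :: "nat set \<Rightarrow> real"
  defines "m1 \<equiv> mval L {0,1}" and "m2 \<equiv> mval L {0,2}" and "m3 \<equiv> mval L {0,3}"
  shows "alpha_t L {0,1} = gen_angle m1 m2 m3" "alpha_t L {2,3} = gen_angle m1 m2 m3"
    "alpha_t L {0,2} = gen_angle m2 m1 m3" "alpha_t L {1,3} = gen_angle m2 m1 m3"
    "alpha_t L {0,3} = gen_angle m3 m1 m2" "alpha_t L {1,2} = gen_angle m3 m1 m2"
proof -
  have e: "{2::nat,0} = {0,2}" "{2::nat,1} = {1,2}" "{1::nat,0} = {0,1}" "{3::nat,0} = {0,3}"
    "{3::nat,1} = {1,3}" "{3::nat,2} = {2,3}" by auto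
  have mm: "Min {0::nat,1} = 0" "Min {2::nat,3} = 2" "Max {2::nat,3} = 3" "Min {0::nat,2} = 0" "Min {1::nat,3} = 1"
    "Max {1::nat,3} = 3" "Min {0::nat,3} = 0" "Min {1::nat,2} = 1" "Max {1::nat,2} = 2" "Max {0::nat,1} = 1"
    "Max {0::nat,2} = 2" "Max {0::nat,3} = 3" by auto
  show "alpha_t L {0,1} = gen_angle m1 m2 m3" "alpha_t L {2,3} = gen_angle m1 m2 m3"
    "alpha_t L {0,2} = gen_angle m2 m1 m3" "alpha_t L {1,3} = gen_angle m2 m1 m3"
    "alpha_t L {0,3} = gen_angle m3 m1 m2" "alpha_t L {1,2} = gen_angle m3 m1 m2"
    unfolding alpha_t_def Let_def m1_def m2_def m3_def
    by (simp_all only: V4_diffs mval_pairs e mm ga_sym[of "mval L {0,1}"] ga_sym[of "mval L {0,2}"] ga_sym[of "mval L {0,3}"])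
qed

lemma tet_sum:
  fixes L :: "nat set \<Rightarrow> real" and g :: "nat set \<Rightarrow> real"
  defines "m1 \<equiv> mval L {0,1}" and "m2 \<equiv> mval L {0,2}" and "m3 \<equiv> mval L {0,3}"
  shows "(\<Sum>A\<in>tet_edges. f (alpha_t L A) * g A) =
     f (gen_angle m1 m2 m3) * (g {0,1} + g {2,3}) + f (gen_angle m2 m1 m3) * (g {0,2} + g {1,3})
     + f (gen_angle m3 m1 m2) * (g {0,3} + g {1,2})"
proof -
  have d: "{0::nat,1} \<noteq> {0,2}" "{0::nat,1} \<noteq> {0,3}" "{0::nat,1} \<noteq> {1,2}" "{0::nat,1} \<noteq> {1,3}" "{0::nat,1} \<noteq> {2,3}"
    "{0::nat,2} \<noteq> {0,3}" "{0::nat,2} \<noteq> {1,2}" "{0::nat,2} \<noteq> {1,3}" "{0::nat,2} \<noteq> {2,3}"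
    "{0::nat,3} \<noteq> {1,2}" "{0::nat,3} \<noteq> {1,3}" "{0::nat,3} \<noteq> {2,3}"
    "{1::nat,2} \<noteq> {1,3}" "{1::nat,2} \<noteq> {2,3}" "{1::nat,3} \<noteq> {2,3}"
    by (auto simp: doubleton_eq_iff)
  show ?thesis unfolding tet_edges_eq using d
    by (simp add: alpha_vals[of L, folded m1_def m2_def m3_def] algebra_simps)
qed

lemma tet_angle_sum:
  fixes L :: "nat set \<Rightarrow> real"
  shows "(\<Sum>A\<in>tet_edges. alpha_t L A) = 2 * pi"
proof -
  have "(\<Sum>A\<in>tet_edges. alpha_t L A) = 2 * (gen_angle (mval L {0,1}) (mval L {0,2}) (mval L {0,3}) +
       gen_angle (mval L {0,2}) (mval L {0,1}) (mval L {0,3}) + gen_angle (mval L {0,3}) (mval L {0,1}) (mval L {0,2}))"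
    using tet_sum[of "\<lambda>x. x" L "\<lambda>_. 1"] by simp
  also have "\<dots> = 2 * pi" by (subst ga_sum) (auto simp: mval_def)
  finally show ?thesis .
qed


locale PM =
  fixes Tet :: "'a set" and glue :: "'a \<times> nat \<Rightarrow> 'a \<times> nat" and gmap :: "'a \<times> nat \<Rightarrow> nat \<Rightarrow> nat"
  assumes P: "pseudo3 Tet glue gmap"
begin

abbreviation "ED \<equiv> edges Tet"
abbreviation "cl \<equiv> edge_class Tet glue gmap"
abbreviation "EC \<equiv> edge_classes Tet glue gmap"
abbreviation "RR \<equiv> edge_step Tet glue gmap \<union> (edge_step Tet glue gmap)\<inverse>"

lemma finTet: "finite Tet" and Tet_ne: "Tet \<noteq> {}"
  using P unfolding pseudo3_def by auto

lemma fin_tet_edges: "finite tet_edges" and card_tet_edges: "card tet_edges = 6"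
  unfolding tet_edges_eq by (auto simp: doubleton_eq_iff)

lemma fin_ED: "finite ED"
  unfolding edges_def using finTet fin_tet_edges by simp

lemma card_ED: "card ED = card Tet * 6"
  unfolding edges_def using card_tet_edges by (simp add: card_cartesian_product)

lemma RR_in: "(x, y) \<in> RR \<Longrightarrow> x \<in> ED \<and> y \<in> ED"
  unfolding edge_step_def by auto

lemma rel_sym: "(x, y) \<in> edge_rel Tet glue gmap \<Longrightarrow> (y, x) \<in> edge_rel Tet glue gmap"
proof -
  assume "(x, y) \<in> edge_rel Tet glue gmap"
  hence "(x, y) \<in> RR\<^sup>*" unfolding edge_rel_def .
  hence "(y, x) \<in> (RR\<inverse>)\<^sup>*" by (simp add: rtrancl_converse)
  moreover have "RR\<inverse> = RR" by auto
  ultimately show ?thesis unfolding edge_rel_def by simp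
qed

lemma rel_trans: "(x, y) \<in> edge_rel Tet glue gmap \<Longrightarrow> (y, z) \<in> edge_rel Tet glue gmap \<Longrightarrow> (x, z) \<in> edge_rel Tet glue gmap"
  unfolding edge_rel_def by (rule rtrancl_trans)

lemma rel_in: "(x, y) \<in> edge_rel Tet glue gmap \<Longrightarrow> x \<in> ED \<Longrightarrow> y \<in> ED"
  unfolding edge_rel_def
proof (induction rule: rtrancl_induct)
  case base then show ?case .
next
  case (step y z) then show ?case using RR_in by blast
qed

lemma cl_self: "x \<in> cl x"
  unfolding edge_class_def edge_rel_def by simp

lemma cl_sub: "x \<in> ED \<Longrightarrow> cl x \<subseteq> ED"
  unfolding edge_class_def using rel_in by blast

lemma cl_eq: "y \<in> cl x \<Longrightarrow> cl y = cl x"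
  unfolding edge_class_def using rel_sym rel_trans by blast

lemma fin_EC: "finite EC"
  unfolding edge_classes_def using fin_ED by simp

lemma EC_ne: "EC \<noteq> {}"
  unfolding edge_classes_def edges_def using Tet_ne tet_edges_eq by auto

lemma cl_in_EC: "\<sigma> \<in> Tet \<Longrightarrow> A \<in> tet_edges \<Longrightarrow> cl (\<sigma>, A) \<in> EC"
  unfolding edge_classes_def edges_def by auto

lemma EC_sub: "e \<in> EC \<Longrightarrow> e \<subseteq> ED"
  unfolding edge_classes_def using cl_sub by auto

lemma fin_e: "e \<in> EC \<Longrightarrow> finite e"
  using EC_sub fin_ED finite_subset by blast

lemma cl_of_mem: "e \<in> EC \<Longrightarrow> x \<in> e \<Longrightarrow> cl x = e"
proof -
  assume e: "e \<in> EC" and x: "x \<in> e"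
  obtain z where "e = cl z" using e unfolding edge_classes_def by auto
  thus ?thesis using x cl_eq by simp
qed

lemma sum_partition: "(\<Sum>e\<in>EC. \<Sum>x\<in>e. f x) = (\<Sum>x\<in>ED. f x)"
proof -
  have "(\<Sum>x\<in>ED. f x) = (\<Sum>e\<in>cl ` ED. sum f {x \<in> ED. cl x = e})"
    by (rule sum.image_gen[OF fin_ED])
  also have "\<dots> = (\<Sum>e\<in>EC. \<Sum>x\<in>e. f x)"
  proof (rule sum.cong)
    show "cl ` ED = EC" unfolding edge_classes_def ..
  next
    fix e assume e: "e \<in> EC"
    have "{x \<in> ED. cl x = e} = e"
    proof
      show "{x \<in> ED. cl x = e} \<subseteq> e" using cl_self by blast
      show "e \<subseteq> {x \<in> ED. cl x = e}" using EC_sub[OF e] cl_of_mem[OF e] by blast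
    qed
    then show "sum f {x \<in> ED. cl x = e} = (\<Sum>x\<in>e. f x)" by simp
  qed
  finally show ?thesis by simp
qed

lemma sum_ED: "(\<Sum>x\<in>ED. f x) = (\<Sum>\<sigma>\<in>Tet. \<Sum>A\<in>tet_edges. f (\<sigma>, A))"
  unfolding edges_def by (simp add: sum.cartesian_product)

lemma card_EC: "(\<Sum>e\<in>EC. card e) = card Tet * 6"
  using sum_partition[of "\<lambda>_. 1::nat"] card_ED fin_ED by simp

lemma lsig_mem: "e \<in> EC \<Longrightarrow> x \<in> e \<Longrightarrow> lsig Tet glue gmap l (fst x) (snd x) = l e"
  unfolding lsig_def using cl_of_mem by simp

lemma curv_sum:
  fixes l g :: "('a \<times> nat set) set \<Rightarrow> real"
  shows "(\<Sum>e\<in>EC. curv Tet glue gmap l e * g e) = 2 * pi * (\<Sum>e\<in>EC. g e)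
     - (\<Sum>\<sigma>\<in>Tet. \<Sum>A\<in>tet_edges. alpha_t (lsig Tet glue gmap l \<sigma>) A * lsig Tet glue gmap g \<sigma> A)"
proof -
  have "(\<Sum>e\<in>EC. curv Tet glue gmap l e * g e) =
      (\<Sum>e\<in>EC. 2 * pi * g e - (\<Sum>x\<in>e. alpha_t (lsig Tet glue gmap l (fst x)) (snd x) * g e))"
    unfolding curv_def by (simp add: left_diff_distrib sum_distrib_right)
  also have "\<dots> = 2 * pi * (\<Sum>e\<in>EC. g e) - (\<Sum>e\<in>EC. \<Sum>x\<in>e. alpha_t (lsig Tet glue gmap l (fst x)) (snd x) * lsig Tet glue gmap g (fst x) (snd x))"
    by (simp add: sum_subtractf sum_distrib_left lsig_mem)
  also have "\<dots> = 2 * pi * (\<Sum>e\<in>EC. g e) - (\<Sum>\<sigma>\<in>Tet. \<Sum>A\<in>tet_edges. alpha_t (lsig Tet glue gmap l \<sigma>) A * lsig Tet glue gmap g \<sigma> A)"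
    unfolding sum_partition sum_ED by simp
  finally show ?thesis .
qed

end


lemma deriv_nonpos_mono:
  fixes g g' :: "real \<Rightarrow> real"
  assumes D: "\<And>t. t \<ge> 0 \<Longrightarrow> (g has_real_derivative g' t) (at t within {0..})"
    and N: "\<And>t. t > 0 \<Longrightarrow> g' t \<le> 0" and ab: "0 \<le> a" "a \<le> b"
  shows "g b \<le> g a"
proof (cases "a = b")
  case True then show ?thesis by simp
next
  case False
  hence lt: "a < b" using ab by simp
  have cont: "continuous_on {a..b} g"
    by (rule DERIV_continuous_on[where D=g']) (use ab in \<open>auto intro: DERIV_subset[OF D]\<close>)
  have dif: "(g has_real_derivative g' x) (at x)" if "a < x" "x < b" for x
  proof -
    have "(g has_real_derivative g' x) (at x within {0<..})"
      using that ab by (intro DERIV_subset[OF D[of x]]) auto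
    moreover have "at x within {0<..} = at x" using that ab by (intro at_within_open) auto
    ultimately show ?thesis by simp
  qed
  obtain l z where z: "a < z" "z < b" "DERIV g z :> l" "g b - g a = (b - a) * l"
    using MVT[OF lt cont] dif real_differentiable_def by blast
  have "l = g' z" using DERIV_unique[OF z(3) dif[OF z(1,2)]] .
  hence "l \<le> 0" using N z ab by simp
  hence "(b - a) * l \<le> 0" using lt by (simp add: mult_nonneg_nonpos)
  thus ?thesis using z by simp
qed

lemma deriv_zero_const:
  fixes g :: "real \<Rightarrow> real"
  assumes D: "\<And>t. t \<ge> 0 \<Longrightarrow> (g has_real_derivative 0) (at t within {0..})" and t: "0 \<le> t"
  shows "g t = g 0"
proof -
  have "g t \<le> g 0" using deriv_nonpos_mono[of g "\<lambda>_. 0" 0 t] D t by auto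
  moreover have "- g t \<le> - g 0"
    using deriv_nonpos_mono[of "\<lambda>x. - g x" "\<lambda>_. 0" 0 t] D t DERIV_minus[OF D] by fastforce
  ultimately show ?thesis by simp
qed

lemma abs_le_enorm:
  fixes E :: "'b set" and u :: "'b \<Rightarrow> real"
  assumes "finite E" "e \<in> E"
  shows "\<bar>u e\<bar> \<le> sqrt (\<Sum>e\<in>E. (u e)\<^sup>2)"
proof -
  have "(u e)\<^sup>2 \<le> (\<Sum>e\<in>E. (u e)\<^sup>2)" using assms by (intro member_le_sum) auto
  hence "sqrt ((u e)\<^sup>2) \<le> sqrt (\<Sum>e\<in>E. (u e)\<^sup>2)" by (rule real_sqrt_le_mono)
  thus ?thesis by simp
qed

context PM
begin

lemma total_curv: "(\<Sum>e\<in>EC. curv Tet glue gmap l e) = 2 * pi * (real (card EC) - real (card Tet))"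
proof -
  have "(\<Sum>e\<in>EC. curv Tet glue gmap l e) = (\<Sum>e\<in>EC. curv Tet glue gmap l e * (\<lambda>_. 1) e)" by simp
  also have "\<dots> = 2 * pi * real (card EC) - (\<Sum>\<sigma>\<in>Tet. 2 * pi)"
    unfolding curv_sum by (simp add: lsig_def tet_angle_sum)
  finally show ?thesis by (simp add: algebra_simps)
qed

lemma val_count:
  assumes "\<forall>e\<in>EC. valence e = d"
  shows "d * card EC = 6 * card Tet"
  using card_EC assms unfolding valence_def by (simp add: mult.commute)

lemma part1_nozero:
  assumes "\<forall>e\<in>EC. valence e = d" "d \<noteq> 6"
  shows "\<not> (\<exists>l. zero_curv Tet glue gmap l)"
proof
  assume "\<exists>l. zero_curv Tet glue gmap l"
  then obtain l where "zero_curv Tet glue gmap l" by blast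
  hence "(\<Sum>e\<in>EC. curv Tet glue gmap l e) = 0" unfolding zero_curv_def by simp
  hence "card EC = card Tet" using total_curv by simp
  hence "d * card EC = 6 * card EC" using val_count[OF assms(1)] by simp
  moreover have "card EC > 0" using fin_EC EC_ne by (simp add: card_gt_0_iff)
  ultimately show False using assms(2) by simp
qed

lemma part1_flow:
  assumes V: "\<forall>e\<in>EC. valence e = d" and d6: "d \<noteq> 6" and F: "ricci_flow_sol Tet glue gmap l"
  shows "\<exists>tn :: nat \<Rightarrow> real. filterlim tn at_top sequentially \<and>
           filterlim (\<lambda>n. enorm EC (l (tn n))) at_top sequentially"
proof -
  define c where "c = 2 * pi * (real (card EC) - real (card Tet))"
  define S where "S t = (\<Sum>e\<in>EC. l t e)" for t
  have cardpos: "card EC > 0" using fin_EC EC_ne by (simp add: card_gt_0_iff)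
  have cne: "c \<noteq> 0"
  proof
    assume "c = 0"
    hence "card EC = card Tet" unfolding c_def by simp
    hence "d * card EC = 6 * card EC" using val_count[OF V] by simp
    thus False using cardpos d6 by simp
  qed
  have DS: "((\<lambda>s. S s - c * s) has_real_derivative 0) (at t within {0..})" if "t \<ge> 0" for t
  proof -
    have "(S has_real_derivative (\<Sum>e\<in>EC. curv Tet glue gmap (l t) e)) (at t within {0..})"
      unfolding S_def using F that unfolding ricci_flow_sol_def by (intro DERIV_sum) auto
    hence "(S has_real_derivative c) (at t within {0..})" using total_curv c_def by simp
    hence "((\<lambda>s. S s - c * s) has_real_derivative c - c * 1) (at t within {0..})"
      by (intro derivative_intros) auto
    thus ?thesis by simp
  qed
  have Slin: "S t = S 0 + c * t" if "t \<ge> 0" for t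
    using deriv_zero_const[of "\<lambda>s. S s - c * s" t] DS that by simp
  have bound: "\<bar>S t\<bar> \<le> real (card EC) * enorm EC (l t)" for t
  proof -
    have "\<bar>S t\<bar> \<le> (\<Sum>e\<in>EC. \<bar>l t e\<bar>)" unfolding S_def by (rule sum_abs)
    also have "\<dots> \<le> (\<Sum>e\<in>EC. enorm EC (l t))"
      unfolding enorm_def by (intro sum_mono abs_le_enorm fin_EC)
    also have "\<dots> = real (card EC) * enorm EC (l t)" by simp
    finally show ?thesis .
  qed
  have lim: "filterlim (\<lambda>n. enorm EC (l (real n))) at_top sequentially"
    unfolding filterlim_at_top
  proof
    fix Z :: real
    define N where "N = nat \<lceil>(\<bar>Z\<bar> * real (card EC) + \<bar>S 0\<bar>) / \<bar>c\<bar>\<rceil>"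
    show "eventually (\<lambda>n. Z \<le> enorm EC (l (real n))) sequentially"
      unfolding eventually_sequentially
    proof (intro exI allI impI)
      fix n assume n: "N \<le> n"
      have cpos: "0 < \<bar>c\<bar>" using cne by simp
      have "(\<bar>Z\<bar> * real (card EC) + \<bar>S 0\<bar>) / \<bar>c\<bar> \<le> real n"
        using n unfolding N_def by linarith
      hence "\<bar>Z\<bar> * real (card EC) + \<bar>S 0\<bar> \<le> \<bar>c\<bar> * real n" using cpos by (simp add: field_simps)
      moreover have "\<bar>c\<bar> * real n - \<bar>S 0\<bar> \<le> \<bar>S (real n)\<bar>"
        using Slin[of "real n"] by (simp add: abs_mult)
      ultimately have "\<bar>Z\<bar> * real (card EC) \<le> real (card EC) * enorm EC (l (real n))"
        using bound[of "real n"] by linarith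
      hence "\<bar>Z\<bar> \<le> enorm EC (l (real n))" using cardpos by (simp add: mult.commute)
      thus "Z \<le> enorm EC (l (real n))" by simp
    qed
  qed
  show ?thesis using lim filterlim_real_sequentially by blast
qed

end


lemma bw_fin:
  fixes f :: "nat \<Rightarrow> 'b \<Rightarrow> real"
  assumes "finite S" "\<And>n x. x \<in> S \<Longrightarrow> \<bar>f n x\<bar> \<le> B"
  shows "\<exists>r g. strict_mono r \<and> (\<forall>x\<in>S. (\<lambda>n. f (r n) x) \<longlonglongrightarrow> g x)"
  using assms
proof (induction S rule: finite_induct)
  case empty
  show ?case by (rule exI[of _ id]) (auto simp: strict_mono_def)
next
  case (insert a S)
  then obtain r g where rg: "strict_mono r" "\<forall>x\<in>S. (\<lambda>n. f (r n) x) \<longlonglongrightarrow> g x" by blast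
  obtain \<phi> where phi: "strict_mono \<phi>" "monoseq (\<lambda>n. f (r (\<phi> n)) a)"
    using seq_monosub[of "\<lambda>n. f (r n) a"] by blast
  have "Bseq (\<lambda>n. f (r (\<phi> n)) a)" using insert.prems by (intro BseqI'[where K=B]) auto
  hence "convergent (\<lambda>n. f (r (\<phi> n)) a)" using phi(2) by (rule Bseq_monoseq_convergent)
  then obtain L where L: "(\<lambda>n. f (r (\<phi> n)) a) \<longlonglongrightarrow> L" by (auto simp: convergent_def)
  have sm: "strict_mono (r \<circ> \<phi>)" using rg(1) phi(1) by (rule strict_mono_o)
  have "\<forall>x\<in>insert a S. (\<lambda>n. f ((r \<circ> \<phi>) n) x) \<longlonglongrightarrow> (g(a := L)) x"
  proof
    fix x assume x: "x \<in> insert a S"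
    show "(\<lambda>n. f ((r \<circ> \<phi>) n) x) \<longlonglongrightarrow> (g(a := L)) x"
    proof (cases "x = a")
      case True then show ?thesis using L by simp
    next
      case False
      hence "x \<in> S" using x by simp
      hence "((\<lambda>n. f (r n) x) \<circ> \<phi>) \<longlonglongrightarrow> g x" using rg(2) phi(1) by (intro LIMSEQ_subseq_LIMSEQ) auto
      then show ?thesis using False by (simp add: comp_def)
    qed
  qed
  then show ?case using sm by blast
qed

lemma hoffman:
  fixes S :: "'b set" and Q :: "('b \<Rightarrow> real) \<Rightarrow> real" and W :: "('b \<Rightarrow> real) set"
  assumes fin: "finite S"
    and Qnn: "\<And>u. 0 \<le> Q u"
    and Qhom: "\<And>c u. Q (\<lambda>e. c * u e) = c\<^sup>2 * Q u"
    and Qcont: "\<And>f g. (\<forall>e\<in>S. (\<lambda>n. f n e) \<longlonglongrightarrow> g e) \<Longrightarrow> (\<lambda>n. Q (f n)) \<longlonglongrightarrow> Q g"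
    and Qzero: "\<And>u. Q u = 0 \<Longrightarrow> u \<in> W"
  shows "\<exists>\<kappa>>0. \<forall>u. (\<forall>w\<in>W. (\<Sum>e\<in>S. u e * w e) = 0) \<longrightarrow> \<kappa> * (\<Sum>e\<in>S. (u e)\<^sup>2) \<le> Q u"
proof (rule ccontr)
  assume neg: "\<not> ?thesis"
  have ex: "\<exists>u. (\<forall>w\<in>W. (\<Sum>e\<in>S. u e * w e) = 0) \<and> Q u < inverse (real (Suc n)) * (\<Sum>e\<in>S. (u e)\<^sup>2)" for n :: nat
  proof -
    have pos: "inverse (real (Suc n)) > 0" by simp
    from neg have "\<forall>\<kappa>>0. \<exists>u. (\<forall>w\<in>W. (\<Sum>e\<in>S. u e * w e) = 0) \<and> \<not> \<kappa> * (\<Sum>e\<in>S. (u e)\<^sup>2) \<le> Q u"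
      by blast
    then obtain u where "(\<forall>w\<in>W. (\<Sum>e\<in>S. u e * w e) = 0)" "\<not> inverse (real (Suc n)) * (\<Sum>e\<in>S. (u e)\<^sup>2) \<le> Q u"
      using pos by blast
    thus ?thesis by (intro exI[of _ u]) (simp add: not_le)
  qed
  obtain u where u0: "\<And>n. (\<forall>w\<in>W. (\<Sum>e\<in>S. u n e * w e) = 0) \<and> Q (u n) < inverse (real (Suc n)) * (\<Sum>e\<in>S. (u n e)\<^sup>2)"
    using ex by metis
  have u: "\<And>n. (\<forall>w\<in>W. (\<Sum>e\<in>S. u n e * w e) = 0)"
    "\<And>n. Q (u n) < inverse (real (Suc n)) * (\<Sum>e\<in>S. (u n e)\<^sup>2)" using u0 by auto
  define N where "N n = (\<Sum>e\<in>S. (u n e)\<^sup>2)" for n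
  have Npos: "0 < N n" for n
  proof -
    have "0 \<le> N n" unfolding N_def by (simp add: sum_nonneg)
    moreover have "N n \<noteq> 0"
    proof
      assume "N n = 0"
      thus False using u(2)[of n] Qnn[of "u n"] unfolding N_def by simp
    qed
    ultimately show ?thesis by simp
  qed
  define v where "v n = (\<lambda>e. inverse (sqrt (N n)) * u n e)" for n
  have Nv: "(\<Sum>e\<in>S. (v n e)\<^sup>2) = 1" for n
  proof -
    have "(\<Sum>e\<in>S. (v n e)\<^sup>2) = (\<Sum>e\<in>S. inverse (N n) * (u n e)\<^sup>2)"
      unfolding v_def using Npos[of n] by (simp add: power_mult_distrib power_inverse)
    also have "\<dots> = inverse (N n) * N n" unfolding N_def by (simp add: sum_distrib_left)
    finally show ?thesis using Npos[of n] by simp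
  qed
  have Qv: "Q (v n) < inverse (real (Suc n))" for n
  proof -
    have "Q (v n) = inverse (N n) * Q (u n)"
      unfolding v_def Qhom using Npos[of n] by (simp add: power_inverse)
    also have "\<dots> < inverse (N n) * (inverse (real (Suc n)) * N n)"
      using u(2)[of n] Npos[of n] unfolding N_def by (intro mult_strict_left_mono) auto
    also have "\<dots> = inverse (real (Suc n))" using Npos[of n] by simp
    finally show ?thesis .
  qed
  have vperp: "(\<Sum>e\<in>S. v n e * w e) = 0" if "w \<in> W" for n w
  proof -
    have "(\<Sum>e\<in>S. v n e * w e) = inverse (sqrt (N n)) * (\<Sum>e\<in>S. u n e * w e)"
      unfolding v_def by (simp add: sum_distrib_left mult.assoc)
    thus ?thesis using u(1)[of n] that by simp
  qed
  have vb: "\<bar>v n e\<bar> \<le> 1" if "e \<in> S" for n e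
  proof -
    have "(v n e)\<^sup>2 \<le> (\<Sum>e\<in>S. (v n e)\<^sup>2)" using fin that by (intro member_le_sum) auto
    hence "(v n e)\<^sup>2 \<le> 1\<^sup>2" using Nv[of n] by simp
    thus ?thesis using abs_le_square_iff[of "v n e" 1] by simp
  qed
  obtain r g where rg: "strict_mono r" "\<forall>e\<in>S. (\<lambda>n. v (r n) e) \<longlonglongrightarrow> g e"
    using bw_fin[of S v 1] fin vb by blast
  have Ng: "(\<lambda>n. \<Sum>e\<in>S. (v (r n) e)\<^sup>2) \<longlonglongrightarrow> (\<Sum>e\<in>S. (g e)\<^sup>2)"
    using rg(2) by (intro tendsto_intros) auto
  moreover have "(\<lambda>n. \<Sum>e\<in>S. (v (r n) e)\<^sup>2) = (\<lambda>n. 1)" using Nv by simp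
  ultimately have "(\<lambda>n. 1::real) \<longlonglongrightarrow> (\<Sum>e\<in>S. (g e)\<^sup>2)" by simp
  from LIMSEQ_unique[OF tendsto_const this] have Ng1: "(\<Sum>e\<in>S. (g e)\<^sup>2) = 1" by simp
  have QgL: "(\<lambda>n. Q (v (r n))) \<longlonglongrightarrow> Q g" using Qcont[of "\<lambda>n. v (r n)" g] rg(2) by simp
  have "Q g \<le> 0"
  proof (rule LIMSEQ_le[OF QgL])
    show "(\<lambda>n. inverse (real (Suc n))) \<longlonglongrightarrow> 0" by (rule LIMSEQ_inverse_real_of_nat)
    show "\<exists>N. \<forall>n\<ge>N. Q (v (r n)) \<le> inverse (real (Suc n))"
    proof (intro exI allI impI)
      fix n :: nat
      have "n \<le> r n" using rg(1) by (rule seq_suble)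
      hence "inverse (real (Suc (r n))) \<le> inverse (real (Suc n))" by (simp add: le_imp_inverse_le)
      thus "Q (v (r n)) \<le> inverse (real (Suc n))" using Qv[of "r n"] by linarith
    qed
  qed
  hence "Q g = 0" using Qnn[of g] by simp
  hence gW: "g \<in> W" by (rule Qzero)
  have "(\<lambda>n. \<Sum>e\<in>S. v (r n) e * g e) \<longlonglongrightarrow> (\<Sum>e\<in>S. g e * g e)"
    using rg(2) by (intro tendsto_intros) auto
  moreover have "(\<lambda>n. \<Sum>e\<in>S. v (r n) e * g e) = (\<lambda>n. 0)" using vperp gW by simp
  ultimately have "(\<lambda>n. 0::real) \<longlonglongrightarrow> (\<Sum>e\<in>S. g e * g e)" by simp
  from LIMSEQ_unique[OF tendsto_const this] have "(\<Sum>e\<in>S. g e * g e) = 0" by simp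
  thus False using Ng1 by (simp add: power2_eq_square)
qed

lemma quad_zero:
  fixes c N :: real
  assumes N: "0 \<le> N" and H: "\<And>t. 0 \<le> - 2 * t * c + t\<^sup>2 * N"
  shows "c = 0"
proof (rule ccontr)
  assume c: "c \<noteq> 0"
  define s where "s = inverse (N + 1)"
  have spos: "0 < s" unfolding s_def using N by simp
  have sN: "s * N < 1" unfolding s_def using N by (simp add: field_simps)
  have "- 2 * (c * s) * c + (c * s)\<^sup>2 * N = s * c\<^sup>2 * (s * N - 2)"
    by (simp add: power2_eq_square algebra_simps)
  moreover have "s * c\<^sup>2 * (s * N - 2) < 0"
    using spos c sN by (intro mult_pos_neg) auto
  ultimately show False using H[of "c * s"] by linarith
qed

lemma proj:
  fixes S :: "'b set" and W :: "('b \<Rightarrow> real) set" and l :: "'b \<Rightarrow> real"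
  assumes fin: "finite S"
    and W0: "(\<lambda>_. 0) \<in> W"
    and Wlin: "\<And>w v t. w \<in> W \<Longrightarrow> v \<in> W \<Longrightarrow> (\<lambda>e. w e + t * v e) \<in> W"
    and Wcl: "\<And>f g. (\<forall>n. f n \<in> W) \<Longrightarrow> (\<forall>e\<in>S. (\<lambda>n. f n e) \<longlonglongrightarrow> g e) \<Longrightarrow> g \<in> W"
  shows "\<exists>w0\<in>W. \<forall>w\<in>W. (\<Sum>e\<in>S. (l e - w0 e) * w e) = 0"
proof -
  define F where "F w = (\<Sum>e\<in>S. (l e - w e)\<^sup>2)" for w
  define \<delta> where "\<delta> = Inf (F ` W)"
  have Fnn: "0 \<le> F w" for w unfolding F_def by (simp add: sum_nonneg)
  have bdd: "bdd_below (F ` W)" using Fnn by (intro bdd_belowI) auto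
  have ne: "F ` W \<noteq> {}" using W0 by auto
  have ex: "\<exists>w\<in>W. F w < \<delta> + inverse (real (Suc n))" for n
  proof -
    have "Inf (F ` W) < \<delta> + inverse (real (Suc n))" unfolding \<delta>_def by simp
    from cInf_lessD[OF ne this] show ?thesis by auto
  qed
  obtain w where w: "\<And>n. w n \<in> W" "\<And>n. F (w n) < \<delta> + inverse (real (Suc n))"
    using ex by metis
  define B where "B = (\<Sum>e\<in>S. \<bar>l e\<bar>) + sqrt (\<delta> + 1)"
  have wb: "\<bar>w n e\<bar> \<le> B" if e: "e \<in> S" for n e
  proof -
    have "(l e - w n e)\<^sup>2 \<le> F (w n)" unfolding F_def using fin e by (intro member_le_sum) auto
    also have "\<dots> \<le> \<delta> + 1" using w(2)[of n] inverse_le_1_iff[of "real (Suc n)"] by linarith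
    finally have "sqrt ((l e - w n e)\<^sup>2) \<le> sqrt (\<delta> + 1)" by (rule real_sqrt_le_mono)
    hence a: "\<bar>l e - w n e\<bar> \<le> sqrt (\<delta> + 1)" by simp
    have b: "\<bar>l e\<bar> \<le> (\<Sum>e\<in>S. \<bar>l e\<bar>)" using fin e by (intro member_le_sum) auto
    show ?thesis using a b unfolding B_def by linarith
  qed
  obtain r g where rg: "strict_mono r" "\<forall>e\<in>S. (\<lambda>n. w (r n) e) \<longlonglongrightarrow> g e"
    using bw_fin[of S w B] fin wb by blast
  have gW: "g \<in> W" using Wcl[of "\<lambda>n. w (r n)" g] w(1) rg(2) by simp
  have FL: "(\<lambda>n. F (w (r n))) \<longlonglongrightarrow> F g" unfolding F_def using rg(2) by (intro tendsto_intros) auto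
  have "F g \<le> \<delta>"
  proof (rule LIMSEQ_le[OF FL])
    show "(\<lambda>n. \<delta> + inverse (real (Suc n))) \<longlonglongrightarrow> \<delta>"
      using tendsto_add[OF tendsto_const LIMSEQ_inverse_real_of_nat, of \<delta>] by simp
    show "\<exists>N. \<forall>n\<ge>N. F (w (r n)) \<le> \<delta> + inverse (real (Suc n))"
    proof (intro exI allI impI)
      fix n :: nat
      have "n \<le> r n" using rg(1) by (rule seq_suble)
      hence "inverse (real (Suc (r n))) \<le> inverse (real (Suc n))" by (simp add: le_imp_inverse_le)
      thus "F (w (r n)) \<le> \<delta> + inverse (real (Suc n))" using w(2)[of "r n"] by linarith
    qed
  qed
  have gmin: "F g \<le> F v" if "v \<in> W" for v
  proof -
    have "\<delta> \<le> F v" unfolding \<delta>_def using bdd that by (intro cInf_lower) auto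
    thus ?thesis using \<open>F g \<le> \<delta>\<close> by simp
  qed
  have "\<forall>v\<in>W. (\<Sum>e\<in>S. (l e - g e) * v e) = 0"
  proof
    fix v assume v: "v \<in> W"
    define c where "c = (\<Sum>e\<in>S. (l e - g e) * v e)"
    define N where "N = (\<Sum>e\<in>S. (v e)\<^sup>2)"
    have "N \<ge> 0" unfolding N_def by (simp add: sum_nonneg)
    moreover have "0 \<le> - 2 * t * c + t\<^sup>2 * N" for t
    proof -
      have "F g \<le> F (\<lambda>e. g e + t * v e)" using gmin Wlin[OF gW v] by blast
      also have "F (\<lambda>e. g e + t * v e) = F g - 2 * t * c + t\<^sup>2 * N"
      proof -
        have pt: "(l e - (g e + t * v e))\<^sup>2 = (l e - g e)\<^sup>2 - 2 * t * ((l e - g e) * v e) + t\<^sup>2 * (v e)\<^sup>2" for e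
          by (simp add: power2_eq_square algebra_simps)
        show ?thesis unfolding F_def c_def N_def pt
          by (simp add: sum.distrib sum_subtractf sum_distrib_left mult.assoc)
      qed
      finally show ?thesis by simp
    qed
    ultimately show "c = 0" by (rule quad_zero)
  qed
  thus ?thesis using gW by blast
qed


declare One_nat_def [simp del]

context PM
begin

definition Y1 where "Y1 u \<sigma> = lsig Tet glue gmap u \<sigma> {0,1} + lsig Tet glue gmap u \<sigma> {2,3}"
definition Y2 where "Y2 u \<sigma> = lsig Tet glue gmap u \<sigma> {0,2} + lsig Tet glue gmap u \<sigma> {1,3}"
definition Y3 where "Y3 u \<sigma> = lsig Tet glue gmap u \<sigma> {0,3} + lsig Tet glue gmap u \<sigma> {1,2}"

definition WW where "WW = {w. \<forall>\<sigma>\<in>Tet. Y1 w \<sigma> = Y2 w \<sigma> \<and> Y1 w \<sigma> = Y3 w \<sigma>}"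

definition Qf where "Qf u = (\<Sum>\<sigma>\<in>Tet. (Y1 u \<sigma> - Y2 u \<sigma>)\<^sup>2 + (Y1 u \<sigma> - Y3 u \<sigma>)\<^sup>2 + (Y2 u \<sigma> - Y3 u \<sigma>)\<^sup>2)"

definition Tt where "Tt l \<sigma> = (let s1 = Y1 l \<sigma>; s2 = Y2 l \<sigma>; s3 = Y3 l \<sigma>;
    a1 = gen_angle (exp (s1/2)) (exp (s2/2)) (exp (s3/2));
    a2 = gen_angle (exp (s2/2)) (exp (s1/2)) (exp (s3/2));
    a3 = gen_angle (exp (s3/2)) (exp (s1/2)) (exp (s2/2))
   in (a1 - a2) * (s1 - s2) + (a1 - a3) * (s1 - s3) + (a2 - a3) * (s2 - s3))"

lemma mvals: "mval (lsig Tet glue gmap l \<sigma>) {0,1} = exp (Y1 l \<sigma> / 2)"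
  "mval (lsig Tet glue gmap l \<sigma>) {0,2} = exp (Y2 l \<sigma> / 2)"
  "mval (lsig Tet glue gmap l \<sigma>) {0,3} = exp (Y3 l \<sigma> / 2)"
  unfolding mval_eq Y1_def Y2_def Y3_def by simp_all

lemma Y_lin:
  "Y1 (\<lambda>e. a e - b e) \<sigma> = Y1 a \<sigma> - Y1 b \<sigma>" "Y2 (\<lambda>e. a e - b e) \<sigma> = Y2 a \<sigma> - Y2 b \<sigma>"
  "Y3 (\<lambda>e. a e - b e) \<sigma> = Y3 a \<sigma> - Y3 b \<sigma>"
  "Y1 (\<lambda>e. a e + t * b e) \<sigma> = Y1 a \<sigma> + t * Y1 b \<sigma>" "Y2 (\<lambda>e. a e + t * b e) \<sigma> = Y2 a \<sigma> + t * Y2 b \<sigma>"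
  "Y3 (\<lambda>e. a e + t * b e) \<sigma> = Y3 a \<sigma> + t * Y3 b \<sigma>"
  "Y1 (\<lambda>e. t * b e) \<sigma> = t * Y1 b \<sigma>" "Y2 (\<lambda>e. t * b e) \<sigma> = t * Y2 b \<sigma>"
  "Y3 (\<lambda>e. t * b e) \<sigma> = t * Y3 b \<sigma>"
  "Y1 (\<lambda>_. 0) \<sigma> = 0" "Y2 (\<lambda>_. 0) \<sigma> = 0" "Y3 (\<lambda>_. 0) \<sigma> = 0"
  unfolding Y1_def Y2_def Y3_def lsig_def by (simp_all add: algebra_simps)

lemma inner_K:
  assumes V: "\<forall>e\<in>EC. valence e = 6"
  shows "(\<Sum>e\<in>EC. curv Tet glue gmap l e * g e) =
    (\<Sum>\<sigma>\<in>Tet. (pi/3 - gen_angle (exp (Y1 l \<sigma>/2)) (exp (Y2 l \<sigma>/2)) (exp (Y3 l \<sigma>/2))) * Y1 g \<sigma>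
            + (pi/3 - gen_angle (exp (Y2 l \<sigma>/2)) (exp (Y1 l \<sigma>/2)) (exp (Y3 l \<sigma>/2))) * Y2 g \<sigma>
            + (pi/3 - gen_angle (exp (Y3 l \<sigma>/2)) (exp (Y1 l \<sigma>/2)) (exp (Y2 l \<sigma>/2))) * Y3 g \<sigma>)"
proof -
  have "2 * pi * (\<Sum>e\<in>EC. g e) = (\<Sum>e\<in>EC. \<Sum>x\<in>e. pi / 3 * g e)"
  proof -
    have pe: "(\<Sum>x\<in>e. pi / 3 * g e) = 2 * pi * g e" if "e \<in> EC" for e
      using V that unfolding valence_def by simp
    have "2 * pi * (\<Sum>e\<in>EC. g e) = (\<Sum>e\<in>EC. 2 * pi * g e)" by (simp add: sum_distrib_left)
    also have "\<dots> = (\<Sum>e\<in>EC. \<Sum>x\<in>e. pi / 3 * g e)" using pe by (intro sum.cong refl) simp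
    finally show ?thesis .
  qed
  also have "\<dots> = (\<Sum>e\<in>EC. \<Sum>x\<in>e. pi / 3 * lsig Tet glue gmap g (fst x) (snd x))"
    by (intro sum.cong refl) (simp add: lsig_mem)
  also have "\<dots> = (\<Sum>\<sigma>\<in>Tet. \<Sum>A\<in>tet_edges. pi / 3 * lsig Tet glue gmap g \<sigma> A)"
    unfolding sum_partition sum_ED by simp
  finally have a: "2 * pi * (\<Sum>e\<in>EC. g e) = (\<Sum>\<sigma>\<in>Tet. \<Sum>A\<in>tet_edges. pi / 3 * lsig Tet glue gmap g \<sigma> A)" .
  have "(\<Sum>e\<in>EC. curv Tet glue gmap l e * g e) =
     (\<Sum>\<sigma>\<in>Tet. \<Sum>A\<in>tet_edges. (pi / 3 - alpha_t (lsig Tet glue gmap l \<sigma>) A) * lsig Tet glue gmap g \<sigma> A)"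
    unfolding curv_sum a by (simp add: sum_subtractf[symmetric] left_diff_distrib)
  also have "\<dots> = (\<Sum>\<sigma>\<in>Tet. (pi/3 - gen_angle (exp (Y1 l \<sigma>/2)) (exp (Y2 l \<sigma>/2)) (exp (Y3 l \<sigma>/2))) * Y1 g \<sigma>
            + (pi/3 - gen_angle (exp (Y2 l \<sigma>/2)) (exp (Y1 l \<sigma>/2)) (exp (Y3 l \<sigma>/2))) * Y2 g \<sigma>
            + (pi/3 - gen_angle (exp (Y3 l \<sigma>/2)) (exp (Y1 l \<sigma>/2)) (exp (Y2 l \<sigma>/2))) * Y3 g \<sigma>)"
    by (intro sum.cong refl, subst tet_sum[of "\<lambda>a. pi / 3 - a"]) (simp add: mvals Y1_def Y2_def Y3_def)
  finally show ?thesis .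
qed

lemma ga3_sum: "gen_angle (exp (a/2)) (exp (b/2)) (exp (c/2)) + gen_angle (exp (b/2)) (exp (a/2)) (exp (c/2))
   + gen_angle (exp (c/2)) (exp (a/2)) (exp (b/2)) = pi"
  by (rule ga_sum) auto

lemma K_perp:
  assumes V: "\<forall>e\<in>EC. valence e = 6" and w: "w \<in> WW"
  shows "(\<Sum>e\<in>EC. curv Tet glue gmap l e * w e) = 0"
proof -
  have "(\<Sum>e\<in>EC. curv Tet glue gmap l e * w e) = (\<Sum>\<sigma>\<in>Tet. 0)"
    unfolding inner_K[OF V]
  proof (intro sum.cong refl)
    fix \<sigma> assume s: "\<sigma> \<in> Tet"
    define a1 where "a1 = gen_angle (exp (Y1 l \<sigma>/2)) (exp (Y2 l \<sigma>/2)) (exp (Y3 l \<sigma>/2))"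
    define a2 where "a2 = gen_angle (exp (Y2 l \<sigma>/2)) (exp (Y1 l \<sigma>/2)) (exp (Y3 l \<sigma>/2))"
    define a3 where "a3 = gen_angle (exp (Y3 l \<sigma>/2)) (exp (Y1 l \<sigma>/2)) (exp (Y2 l \<sigma>/2))"
    have sum: "a1 + a2 + a3 = pi" unfolding a1_def a2_def a3_def by (rule ga3_sum)
    have eq: "Y2 w \<sigma> = Y1 w \<sigma>" "Y3 w \<sigma> = Y1 w \<sigma>" using w s unfolding WW_def by auto
    have "(pi/3 - a1) * Y1 w \<sigma> + (pi/3 - a2) * Y2 w \<sigma> + (pi/3 - a3) * Y3 w \<sigma> = (pi - (a1 + a2 + a3)) * Y1 w \<sigma>"
      unfolding eq by (simp add: algebra_simps)
    also have "\<dots> = 0" using sum by simp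
    finally show "(pi/3 - a1) * Y1 w \<sigma> + (pi/3 - a2) * Y2 w \<sigma> + (pi/3 - a3) * Y3 w \<sigma> = 0" .
  qed
  thus ?thesis by simp
qed

lemma inner_u:
  assumes V: "\<forall>e\<in>EC. valence e = 6" and w: "w0 \<in> WW"
  shows "(\<Sum>e\<in>EC. curv Tet glue gmap l e * (l e - w0 e)) = - (1/3) * (\<Sum>\<sigma>\<in>Tet. Tt l \<sigma>)"
proof -
  have "(\<Sum>e\<in>EC. curv Tet glue gmap l e * (l e - w0 e)) = (\<Sum>\<sigma>\<in>Tet. - (1/3) * Tt l \<sigma>)"
    unfolding inner_K[OF V]
  proof (intro sum.cong refl)
    fix \<sigma> assume s: "\<sigma> \<in> Tet"
    define s1 where "s1 = Y1 l \<sigma>"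
    define s2 where "s2 = Y2 l \<sigma>"
    define s3 where "s3 = Y3 l \<sigma>"
    define a1 where "a1 = gen_angle (exp (s1/2)) (exp (s2/2)) (exp (s3/2))"
    define a2 where "a2 = gen_angle (exp (s2/2)) (exp (s1/2)) (exp (s3/2))"
    define a3 where "a3 = gen_angle (exp (s3/2)) (exp (s1/2)) (exp (s2/2))"
    have sum: "a3 = pi - a1 - a2" using ga3_sum[of s1 s2 s3] unfolding a1_def a2_def a3_def by linarith
    define c where "c = Y1 w0 \<sigma>"
    have eq: "Y2 w0 \<sigma> = c" "Y3 w0 \<sigma> = c" using w s unfolding WW_def c_def by auto
    have T: "Tt l \<sigma> = (a1 - a2) * (s1 - s2) + (a1 - a3) * (s1 - s3) + (a2 - a3) * (s2 - s3)"
      unfolding Tt_def Let_def s1_def s2_def s3_def a1_def a2_def a3_def ..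
    have "(pi/3 - a1) * (s1 - c) + (pi/3 - a2) * (s2 - c) + (pi/3 - a3) * (s3 - c) = - (1/3) * Tt l \<sigma>"
      unfolding T sum by (simp add: algebra_simps; simp add: field_simps)
    thus "(pi / 3 - gen_angle (exp (Y1 l \<sigma> / 2)) (exp (Y2 l \<sigma> / 2)) (exp (Y3 l \<sigma> / 2))) * Y1 (\<lambda>e. l e - w0 e) \<sigma> +
          (pi / 3 - gen_angle (exp (Y2 l \<sigma> / 2)) (exp (Y1 l \<sigma> / 2)) (exp (Y3 l \<sigma> / 2))) * Y2 (\<lambda>e. l e - w0 e) \<sigma> +
          (pi / 3 - gen_angle (exp (Y3 l \<sigma> / 2)) (exp (Y1 l \<sigma> / 2)) (exp (Y2 l \<sigma> / 2))) * Y3 (\<lambda>e. l e - w0 e) \<sigma> =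
          - (1 / 3) * Tt l \<sigma>"
      unfolding Y_lin eq c_def[symmetric] s1_def[symmetric] s2_def[symmetric] s3_def[symmetric]
        a1_def[symmetric] a2_def[symmetric] a3_def[symmetric] .
  qed
  thus ?thesis by (simp add: sum_distrib_left)
qed

lemma Qf_diff:
  assumes w: "w0 \<in> WW"
  shows "Qf (\<lambda>e. l e - w0 e) = (\<Sum>\<sigma>\<in>Tet. (Y1 l \<sigma> - Y2 l \<sigma>)\<^sup>2 + (Y1 l \<sigma> - Y3 l \<sigma>)\<^sup>2 + (Y2 l \<sigma> - Y3 l \<sigma>)\<^sup>2)"
  unfolding Qf_def Y_lin
proof (intro sum.cong refl)
  fix \<sigma> assume s: "\<sigma> \<in> Tet"
  have eq: "Y2 w0 \<sigma> = Y1 w0 \<sigma>" "Y3 w0 \<sigma> = Y1 w0 \<sigma>" using w s unfolding WW_def by auto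
  show "(Y1 l \<sigma> - Y1 w0 \<sigma> - (Y2 l \<sigma> - Y2 w0 \<sigma>))\<^sup>2 + (Y1 l \<sigma> - Y1 w0 \<sigma> - (Y3 l \<sigma> - Y3 w0 \<sigma>))\<^sup>2 +
        (Y2 l \<sigma> - Y2 w0 \<sigma> - (Y3 l \<sigma> - Y3 w0 \<sigma>))\<^sup>2 =
        (Y1 l \<sigma> - Y2 l \<sigma>)\<^sup>2 + (Y1 l \<sigma> - Y3 l \<sigma>)\<^sup>2 + (Y2 l \<sigma> - Y3 l \<sigma>)\<^sup>2"
    unfolding eq by (simp add: algebra_simps)
qed

lemma lsig_bound:
  assumes "\<sigma> \<in> Tet" "A \<in> tet_edges"
  shows "\<bar>lsig Tet glue gmap u \<sigma> A\<bar> \<le> sqrt (\<Sum>e\<in>EC. (u e)\<^sup>2)"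
  unfolding lsig_def using cl_in_EC[OF assms] fin_EC by (rule abs_le_enorm[rotated])

lemma Y_bound:
  assumes s: "\<sigma> \<in> Tet"
  shows "\<bar>Y1 u \<sigma> - Y2 u \<sigma>\<bar> \<le> 4 * sqrt (\<Sum>e\<in>EC. (u e)\<^sup>2)"
    "\<bar>Y1 u \<sigma> - Y3 u \<sigma>\<bar> \<le> 4 * sqrt (\<Sum>e\<in>EC. (u e)\<^sup>2)"
    "\<bar>Y2 u \<sigma> - Y3 u \<sigma>\<bar> \<le> 4 * sqrt (\<Sum>e\<in>EC. (u e)\<^sup>2)"
proof -
  have b: "\<bar>lsig Tet glue gmap u \<sigma> A\<bar> \<le> sqrt (\<Sum>e\<in>EC. (u e)\<^sup>2)" if "A \<in> tet_edges" for A
    using lsig_bound[OF s that] .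
  have e: "{0,1} \<in> tet_edges" "{2,3} \<in> tet_edges" "{0,2} \<in> tet_edges" "{1,3} \<in> tet_edges"
    "{0,3} \<in> tet_edges" "{1,2} \<in> tet_edges" unfolding tet_edges_eq by auto
  show "\<bar>Y1 u \<sigma> - Y2 u \<sigma>\<bar> \<le> 4 * sqrt (\<Sum>e\<in>EC. (u e)\<^sup>2)"
    "\<bar>Y1 u \<sigma> - Y3 u \<sigma>\<bar> \<le> 4 * sqrt (\<Sum>e\<in>EC. (u e)\<^sup>2)"
    "\<bar>Y2 u \<sigma> - Y3 u \<sigma>\<bar> \<le> 4 * sqrt (\<Sum>e\<in>EC. (u e)\<^sup>2)"
    unfolding Y1_def Y2_def Y3_def using b[OF e(1)] b[OF e(2)] b[OF e(3)] b[OF e(4)] b[OF e(5)] b[OF e(6)]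
    by linarith+
qed

lemma Tt_bound:
  assumes "\<bar>Y1 l \<sigma> - Y2 l \<sigma>\<bar> \<le> M" "\<bar>Y1 l \<sigma> - Y3 l \<sigma>\<bar> \<le> M" "\<bar>Y2 l \<sigma> - Y3 l \<sigma>\<bar> \<le> M"
  shows "exp (-M/2) / 6 * ((Y1 l \<sigma> - Y2 l \<sigma>)\<^sup>2 + (Y1 l \<sigma> - Y3 l \<sigma>)\<^sup>2 + (Y2 l \<sigma> - Y3 l \<sigma>)\<^sup>2) \<le> Tt l \<sigma>"
  unfolding Tt_def Let_def using tri_gen[OF assms] by simp

lemma Tt_nonneg: "0 \<le> Tt l \<sigma>"
proof -
  define M where "M = \<bar>Y1 l \<sigma> - Y2 l \<sigma>\<bar> + \<bar>Y1 l \<sigma> - Y3 l \<sigma>\<bar> + \<bar>Y2 l \<sigma> - Y3 l \<sigma>\<bar>"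
  have "exp (-M/2) / 6 * ((Y1 l \<sigma> - Y2 l \<sigma>)\<^sup>2 + (Y1 l \<sigma> - Y3 l \<sigma>)\<^sup>2 + (Y2 l \<sigma> - Y3 l \<sigma>)\<^sup>2) \<le> Tt l \<sigma>"
    by (rule Tt_bound) (auto simp: M_def)
  moreover have "0 \<le> exp (-M/2) / 6 * ((Y1 l \<sigma> - Y2 l \<sigma>)\<^sup>2 + (Y1 l \<sigma> - Y3 l \<sigma>)\<^sup>2 + (Y2 l \<sigma> - Y3 l \<sigma>)\<^sup>2)"
    by simp
  ultimately show ?thesis by linarith
qed

lemma Y_tendsto:
  assumes "\<forall>e\<in>EC. (\<lambda>n. f n e) \<longlonglongrightarrow> g e" "\<sigma> \<in> Tet"
  shows "(\<lambda>n. Y1 (f n) \<sigma>) \<longlonglongrightarrow> Y1 g \<sigma>" "(\<lambda>n. Y2 (f n) \<sigma>) \<longlonglongrightarrow> Y2 g \<sigma>"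
    "(\<lambda>n. Y3 (f n) \<sigma>) \<longlonglongrightarrow> Y3 g \<sigma>"
proof -
  have e: "{0,1} \<in> tet_edges" "{2,3} \<in> tet_edges" "{0,2} \<in> tet_edges" "{1,3} \<in> tet_edges"
    "{0,3} \<in> tet_edges" "{1,2} \<in> tet_edges" unfolding tet_edges_eq by auto
  have t: "(\<lambda>n. lsig Tet glue gmap (f n) \<sigma> A) \<longlonglongrightarrow> lsig Tet glue gmap g \<sigma> A" if "A \<in> tet_edges" for A
    unfolding lsig_def using assms(1) cl_in_EC[OF assms(2) that] by blast
  show "(\<lambda>n. Y1 (f n) \<sigma>) \<longlonglongrightarrow> Y1 g \<sigma>" "(\<lambda>n. Y2 (f n) \<sigma>) \<longlonglongrightarrow> Y2 g \<sigma>"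
    "(\<lambda>n. Y3 (f n) \<sigma>) \<longlonglongrightarrow> Y3 g \<sigma>"
    unfolding Y1_def Y2_def Y3_def using e by (auto intro!: tendsto_add t)
qed

lemma hoff_Qf: "\<exists>\<kappa>>0. \<forall>u. (\<forall>w\<in>WW. (\<Sum>e\<in>EC. u e * w e) = 0) \<longrightarrow> \<kappa> * (\<Sum>e\<in>EC. (u e)\<^sup>2) \<le> Qf u"
proof (rule hoffman[OF fin_EC])
  show "0 \<le> Qf u" for u unfolding Qf_def by (intro sum_nonneg) auto
  show "Qf (\<lambda>e. c * u e) = c\<^sup>2 * Qf u" for c u
    unfolding Qf_def Y_lin
    by (simp add: sum_distrib_left power_mult_distrib right_diff_distrib[symmetric] distrib_left)
  show "(\<lambda>n. Qf (f n)) \<longlonglongrightarrow> Qf g" if "\<forall>e\<in>EC. (\<lambda>n. f n e) \<longlonglongrightarrow> g e" for f g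
    unfolding Qf_def by (intro tendsto_sum tendsto_intros Y_tendsto[OF that])
  show "u \<in> WW" if "Qf u = 0" for u
  proof -
    have "\<forall>\<sigma>\<in>Tet. (Y1 u \<sigma> - Y2 u \<sigma>)\<^sup>2 + (Y1 u \<sigma> - Y3 u \<sigma>)\<^sup>2 + (Y2 u \<sigma> - Y3 u \<sigma>)\<^sup>2 = 0"
      using that unfolding Qf_def by (subst (asm) sum_nonneg_eq_0_iff[OF finTet]) auto
    hence "\<forall>\<sigma>\<in>Tet. Y1 u \<sigma> = Y2 u \<sigma> \<and> Y1 u \<sigma> = Y3 u \<sigma>"
      by (auto simp: add_nonneg_eq_0_iff)
    thus ?thesis unfolding WW_def by blast
  qed
qed

lemma proj_WW: "\<exists>w0\<in>WW. \<forall>w\<in>WW. (\<Sum>e\<in>EC. (l e - w0 e) * w e) = 0"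
proof (rule proj[OF fin_EC])
  show "(\<lambda>_. 0) \<in> WW" by (simp add: WW_def Y_lin)
  show "(\<lambda>e. w e + t * v e) \<in> WW" if "w \<in> WW" "v \<in> WW" for w v t
    using that unfolding WW_def mem_Collect_eq Y_lin by (metis (no_types))
  show "g \<in> WW" if "\<forall>n. f n \<in> WW" "\<forall>e\<in>EC. (\<lambda>n. f n e) \<longlonglongrightarrow> g e" for f g
    unfolding WW_def
  proof (intro CollectI ballI conjI)
    fix \<sigma> assume s: "\<sigma> \<in> Tet"
    note T = Y_tendsto[OF that(2) s]
    have pt: "Y1 (f n) \<sigma> = Y2 (f n) \<sigma> \<and> Y1 (f n) \<sigma> = Y3 (f n) \<sigma>" for n
      using that(1) s unfolding WW_def by blast
    have e: "(\<lambda>n. Y2 (f n) \<sigma>) = (\<lambda>n. Y1 (f n) \<sigma>)" "(\<lambda>n. Y3 (f n) \<sigma>) = (\<lambda>n. Y1 (f n) \<sigma>)"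
      using pt by (intro ext; simp)+
    show "Y1 g \<sigma> = Y2 g \<sigma>" using LIMSEQ_unique[OF T(1)] T(2) unfolding e by simp
    show "Y1 g \<sigma> = Y3 g \<sigma>" using LIMSEQ_unique[OF T(1)] T(3) unfolding e by simp
  qed
qed

end


declare One_nat_def [simp del]

context PM
begin

lemma WW_good:
  assumes V: "\<forall>e\<in>EC. valence e = 6" and w: "w \<in> WW"
  shows "decorated Tet glue gmap w \<and> zero_curv Tet glue gmap w"
proof
  show "decorated Tet glue gmap w" unfolding decorated_def
  proof
    fix \<sigma> assume s: "\<sigma> \<in> Tet"
    have eq: "Y2 w \<sigma> = Y1 w \<sigma>" "Y3 w \<sigma> = Y1 w \<sigma>" using w s unfolding WW_def by auto
    show "in_L (lsig Tet glue gmap w \<sigma>)" unfolding in_L_def mvals eq tri_strict_def by simp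
  qed
next
  have ang: "alpha_t (lsig Tet glue gmap w \<sigma>) A = pi / 3" if s: "\<sigma> \<in> Tet" and A: "A \<in> tet_edges" for \<sigma> A
  proof -
    have eq: "Y2 w \<sigma> = Y1 w \<sigma>" "Y3 w \<sigma> = Y1 w \<sigma>" using w s unfolding WW_def by auto
    have g: "gen_angle (exp (Y1 w \<sigma> / 2)) (exp (Y1 w \<sigma> / 2)) (exp (Y1 w \<sigma> / 2)) = pi / 3"
      by (rule ga_equi) simp
    from A show ?thesis unfolding tet_edges_eq
      using g by (auto simp: alpha_vals mvals eq)
  qed
  show "zero_curv Tet glue gmap w" unfolding zero_curv_def
  proof
    fix e assume e: "e \<in> EC"
    have "(\<Sum>x\<in>e. alpha_t (lsig Tet glue gmap w (fst x)) (snd x)) = (\<Sum>x\<in>e. pi / 3)"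
    proof (intro sum.cong refl)
      fix x assume "x \<in> e"
      hence "x \<in> ED" using EC_sub[OF e] by auto
      thus "alpha_t (lsig Tet glue gmap w (fst x)) (snd x) = pi / 3" unfolding edges_def
        using ang by auto
    qed
    also have "\<dots> = 2 * pi" using V e unfolding valence_def by simp
    finally show "curv Tet glue gmap w e = 0" unfolding curv_def by simp
  qed
qed

end


declare One_nat_def [simp del]

context PM
begin

lemma part2_flow:
  assumes V: "\<forall>e\<in>EC. valence e = 6" and F: "ricci_flow_sol Tet glue gmap l"
  shows "\<exists>ls. decorated Tet glue gmap ls \<and> zero_curv Tet glue gmap ls \<and>
           (\<exists>C c. c > 0 \<and> (\<forall>t\<ge>0. enorm EC (\<lambda>e. l t e - ls e) \<le> C * exp (- c * t)))"
proof -
  have D: "((\<lambda>s. l s e) has_real_derivative curv Tet glue gmap (l t) e) (at t within {0..})"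
    if "e \<in> EC" "t \<ge> 0" for e t
    using F that unfolding ricci_flow_sol_def by blast
  obtain w0 where w0: "w0 \<in> WW" "\<forall>w\<in>WW. (\<Sum>e\<in>EC. (l 0 e - w0 e) * w e) = 0"
    using proj_WW[of "l 0"] by blast
  define Vf where "Vf s = (\<Sum>e\<in>EC. (l s e - w0 e)\<^sup>2)" for s
  have perp: "(\<Sum>e\<in>EC. (l t e - w0 e) * w e) = 0" if w: "w \<in> WW" and t: "t \<ge> 0" for w t
  proof -
    define H where "H s = (\<Sum>e\<in>EC. (l s e - w0 e) * w e)" for s
    have "(H has_real_derivative 0) (at s within {0..})" if "s \<ge> 0" for s
    proof -
      have "(H has_real_derivative (\<Sum>e\<in>EC. curv Tet glue gmap (l s) e * w e)) (at s within {0..})"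
        unfolding H_def using D that by (auto intro!: DERIV_sum derivative_eq_intros)
      thus ?thesis using K_perp[OF V w] by simp
    qed
    hence "H t = H 0" using deriv_zero_const t by blast
    thus ?thesis using w0(2) w unfolding H_def by simp
  qed
  have DV: "(Vf has_real_derivative - (2/3) * (\<Sum>\<sigma>\<in>Tet. Tt (l s) \<sigma>)) (at s within {0..})" if "s \<ge> 0" for s
  proof -
    have "(Vf has_real_derivative (\<Sum>e\<in>EC. 2 * (l s e - w0 e) * curv Tet glue gmap (l s) e)) (at s within {0..})"
      unfolding Vf_def using D that by (auto intro!: DERIV_sum derivative_eq_intros)
    moreover have "(\<Sum>e\<in>EC. 2 * (l s e - w0 e) * curv Tet glue gmap (l s) e)
        = 2 * (\<Sum>e\<in>EC. curv Tet glue gmap (l s) e * (l s e - w0 e))"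
      by (simp add: sum_distrib_left algebra_simps)
    ultimately show ?thesis unfolding inner_u[OF V w0(1)] by simp
  qed
  have Vmono: "Vf t \<le> Vf 0" if "t \<ge> 0" for t
  proof (rule deriv_nonpos_mono[OF DV])
    show "- (2/3) * (\<Sum>\<sigma>\<in>Tet. Tt (l s) \<sigma>) \<le> 0" for s
      using Tt_nonneg by (simp add: sum_nonneg)
  qed (use that in auto)
  obtain \<kappa> where \<kappa>: "\<kappa> > 0" "\<And>u. (\<forall>w\<in>WW. (\<Sum>e\<in>EC. u e * w e) = 0) \<Longrightarrow> \<kappa> * (\<Sum>e\<in>EC. (u e)\<^sup>2) \<le> Qf u"
    using hoff_Qf by blast
  define M where "M = 4 * sqrt (Vf 0)"
  define \<gamma> where "\<gamma> = exp (-M/2) * \<kappa> / 9"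
  have gpos: "\<gamma> > 0" unfolding \<gamma>_def using \<kappa> by simp
  have Dbound: "- (2/3) * (\<Sum>\<sigma>\<in>Tet. Tt (l s) \<sigma>) \<le> - \<gamma> * Vf s" if s: "s \<ge> 0" for s
  proof -
    have bnd: "\<bar>Y1 (l s) \<sigma> - Y2 (l s) \<sigma>\<bar> \<le> M \<and> \<bar>Y1 (l s) \<sigma> - Y3 (l s) \<sigma>\<bar> \<le> M \<and> \<bar>Y2 (l s) \<sigma> - Y3 (l s) \<sigma>\<bar> \<le> M"
      if "\<sigma> \<in> Tet" for \<sigma>
    proof -
      have eq: "Y2 w0 \<sigma> = Y1 w0 \<sigma>" "Y3 w0 \<sigma> = Y1 w0 \<sigma>" using w0(1) that unfolding WW_def by auto
      have "4 * sqrt (Vf s) \<le> M" unfolding M_def using Vmono[OF s] by simp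
      moreover note Y_bound[OF that, of "\<lambda>e. l s e - w0 e"]
      ultimately show ?thesis unfolding Y_lin eq Vf_def by auto
    qed
    have "exp (-M/2) / 6 * Qf (\<lambda>e. l s e - w0 e) \<le> (\<Sum>\<sigma>\<in>Tet. Tt (l s) \<sigma>)"
      unfolding Qf_diff[OF w0(1)] sum_distrib_left using bnd Tt_bound by (intro sum_mono) blast
    moreover have "\<kappa> * Vf s \<le> Qf (\<lambda>e. l s e - w0 e)"
      unfolding Vf_def using \<kappa>(2)[of "\<lambda>e. l s e - w0 e"] perp[OF _ s] by blast
    ultimately have "exp (-M/2) / 6 * (\<kappa> * Vf s) \<le> (\<Sum>\<sigma>\<in>Tet. Tt (l s) \<sigma>)"
      by (smt (verit) exp_gt_zero mult_left_mono divide_nonneg_nonneg)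
    thus ?thesis unfolding \<gamma>_def by (simp add: algebra_simps)
  qed
  define Z where "Z s = Vf s * exp (\<gamma> * s)" for s
  have DZ: "(Z has_real_derivative (- (2/3) * (\<Sum>\<sigma>\<in>Tet. Tt (l s) \<sigma>)) * exp (\<gamma> * s) + Vf s * (\<gamma> * exp (\<gamma> * s))) (at s within {0..})"
    if "s \<ge> 0" for s
    unfolding Z_def using DV[OF that] by (auto intro!: derivative_eq_intros)
  have Zmono: "Z t \<le> Z 0" if "t \<ge> 0" for t
  proof (rule deriv_nonpos_mono[OF DZ])
    fix s :: real assume s: "s > 0"
    have "(- (2/3) * (\<Sum>\<sigma>\<in>Tet. Tt (l s) \<sigma>)) * exp (\<gamma> * s) + Vf s * (\<gamma> * exp (\<gamma> * s))
        = (- (2/3) * (\<Sum>\<sigma>\<in>Tet. Tt (l s) \<sigma>) + \<gamma> * Vf s) * exp (\<gamma> * s)" by (simp add: algebra_simps)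
    also have "\<dots> \<le> 0" using Dbound[of s] s by (intro mult_nonpos_nonneg) auto
    finally show "(- (2/3) * (\<Sum>\<sigma>\<in>Tet. Tt (l s) \<sigma>)) * exp (\<gamma> * s) + Vf s * (\<gamma> * exp (\<gamma> * s)) \<le> 0" .
  qed (use that in auto)
  have final: "enorm EC (\<lambda>e. l t e - w0 e) \<le> sqrt (Vf 0) * exp (- (\<gamma>/2) * t)" if t: "t \<ge> 0" for t
  proof -
    have "Vf t * exp (\<gamma> * t) \<le> Vf 0" using Zmono[OF t] unfolding Z_def by simp
    hence "Vf t \<le> Vf 0 * exp (- (\<gamma> * t))"
      by (simp add: exp_minus field_simps)
    hence "sqrt (Vf t) \<le> sqrt (Vf 0 * exp (- (\<gamma> * t)))" by (rule real_sqrt_le_mono)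
    also have "sqrt (Vf 0 * exp (- (\<gamma> * t))) = sqrt (Vf 0) * exp (- (\<gamma>/2) * t)"
    proof -
      have "exp (- (\<gamma> * t)) = (exp (- (\<gamma>/2) * t))\<^sup>2"
        by (simp add: power2_eq_square exp_add[symmetric])
      thus ?thesis by (simp add: real_sqrt_mult)
    qed
    finally show ?thesis unfolding enorm_def Vf_def .
  qed
  have "\<exists>C c. c > 0 \<and> (\<forall>t\<ge>0. enorm EC (\<lambda>e. l t e - w0 e) \<le> C * exp (- c * t))"
    using final gpos by (intro exI[of _ "sqrt (Vf 0)"] exI[of _ "\<gamma>/2"]) auto
  thus ?thesis using WW_good[OF V w0(1)] by blast
qed

end


theorem mainTheorem4:
  fixes Tet :: "'a set"
    and glue :: "'a \<times> nat \<Rightarrow> 'a \<times> nat"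
    and gmap :: "'a \<times> nat \<Rightarrow> nat \<Rightarrow> nat"
    and d :: nat
  assumes "pseudo3 Tet glue gmap"
    and "edge_transitive Tet glue gmap"
    and "\<forall>e\<in>edge_classes Tet glue gmap. valence e = d"
  shows "(d \<noteq> 6 \<longrightarrow>
            \<not> (\<exists>l. zero_curv Tet glue gmap l) \<and>
            (\<forall>l. ricci_flow_sol Tet glue gmap l \<longrightarrow>
               (\<exists>tn :: nat \<Rightarrow> real. filterlim tn at_top sequentially \<and>
                  filterlim (\<lambda>n. enorm (edge_classes Tet glue gmap) (l (tn n))) at_top sequentially)))
       \<and> (d = 6 \<longrightarrow>
            (\<exists>l. decorated Tet glue gmap l \<and> zero_curv Tet glue gmap l) \<and>
            (\<forall>l. ricci_flow_sol Tet glue gmap l \<longrightarrow>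
               (\<exists>ls. decorated Tet glue gmap ls \<and> zero_curv Tet glue gmap ls \<and>
                  (\<exists>C c. c > 0 \<and> (\<forall>t\<ge>0.
                     enorm (edge_classes Tet glue gmap) (\<lambda>e. l t e - ls e) \<le> C * exp (- c * t))))))"
proof -
  interpret PM Tet glue gmap by unfold_locales (rule assms(1))
  show ?thesis
  proof (intro conjI impI allI)
    assume "d \<noteq> 6"
    thus "\<not> (\<exists>l. zero_curv Tet glue gmap l)" using part1_nozero assms(3) by blast
  next
    fix l assume "d \<noteq> 6" "ricci_flow_sol Tet glue gmap l"
    thus "\<exists>tn :: nat \<Rightarrow> real. filterlim tn at_top sequentially \<and>
                  filterlim (\<lambda>n. enorm (edge_classes Tet glue gmap) (l (tn n))) at_top sequentially"
      using part1_flow assms(3) by blast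
  next
    assume d: "d = 6"
    have "(\<lambda>_. 0) \<in> WW" by (simp add: WW_def Y_lin)
    thus "\<exists>l. decorated Tet glue gmap l \<and> zero_curv Tet glue gmap l"
      using WW_good assms(3) d by blast
  next
    fix l assume d: "d = 6" and F: "ricci_flow_sol Tet glue gmap l"
    show "\<exists>ls. decorated Tet glue gmap ls \<and> zero_curv Tet glue gmap ls \<and>
                  (\<exists>C c. c > 0 \<and> (\<forall>t\<ge>0.
                     enorm (edge_classes Tet glue gmap) (\<lambda>e. l t e - ls e) \<le> C * exp (- c * t)))"
      using part2_flow[OF _ F] assms(3) d by blast
  qed
qed

end
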